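(* Let $W$ be a sunword whose alphabet $\Sigma$ contains at least three proper letters, let $a$ be the least proper letter in the order $\prec$ induced by $W$, and let $w=\sigma a^{\lambda_1}\epsilon\tilde{w}\epsilon a^{\lambda_s}$ be a representative of $W$, equal to its own pattern and written with maximal powers, where $\tilde{w}$ is a word over $\Sigma\setminus\{\sigma\}$. Let $z$ be the greatest element of $(\Sigma\setminus\{\epsilon\},\prec)$. Then all exponents of $z$ in $w$ are even.
   Context: Multisuns: a multisun is a graph with no induced $K_4$ minus an edge, of odd order, whose maximal cliques of size $2$ form a Hamiltonian cycle $C$ (the rim); the other maximal cliques consist of pairwise nonconsecutive vertices of $C$ (inscribed cliques). A sub-multisun deletes the edge sets of some, but not all, inscribed cliques. An $AB$-path (inscribed cliques $A,B$, possibly equal) is a subpath of $C$ with one end in $A$, the other in $B$, internal vertices in no inscribed clique; $A$-path $=AA$-path; for $v\in B$ an $Av$-path is an $AB$-path ending at $v$ in $B$. N-conditions: (N1) every $A$-path has an even number $\ge4$ of vertices; (N2) inscribed cliques have odd size; (N3) all inscribed cliques share a vertex $\xi\in V(C)$ and are otherwise disjoint; (N4) every $A\xi$-path has an even number of vertices; (N5) for $A\ne B$ every $AB$-path has an odd number of vertices. A sunoid is a multisun such that it and all its sub-multisuns satisfy the N-conditions. Words: alphabet $\Sigma$ with distinguished letter $\epsilon$; $x^k$ is $k$ copies of $x$. The pattern $\pi(w)$ is obtained by repeatedly deleting $\epsilon\epsilon$; $v\sim w$ if related by cyclic shift and/or reversal; $u\approx v$ iff $\pi(u)\sim\pi(v)$;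 $[w]$ is the class (cyclic word), $w$ a representative. For a multisun satisfying the N-conditions, label rim vertices by $\sigma$ (in $\ge2$ inscribed cliques), a letter specific to $X$ (only in inscribed clique $X$), or $\epsilon$ (in none); reading around the rim gives $w_G$ and $[w_G]$ is its s-word; letters other than $\epsilon,\sigma$ are proper letters. A sunword is the s-word of a sunoid. Induced order: take a representative $\sigma u$ equal to its own pattern, replace each interval $xx$ of $u$ ($x$ proper) by $x\epsilon\epsilon x$ to get $z'$, let $v=\sigma\epsilon\epsilon z'\epsilon\epsilon=v_1\cdots v_N$ arranged cyclically; $\sigma$ is least and for proper $x\ne y$, $x\prec y$ iff the least cyclic distance from position $1$ to a position labeled $x$ is smaller than for $y$. *)

theory Defs
  imports Main
begin

definition graph :: "'v set \<Rightarrow> ('v \<Rightarrow> 'v \<Rightarrow> bool) \<Rightarrow> bool" where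
  "graph V E \<longleftrightarrow> finite V \<and> (\<forall>x y. E x y \<longrightarrow> x \<in> V \<and> y \<in> V)
     \<and> (\<forall>x y. E x y \<longrightarrow> E y x) \<and> (\<forall>x. \<not> E x x)"

definition clique :: "'v set \<Rightarrow> ('v \<Rightarrow> 'v \<Rightarrow> bool) \<Rightarrow> 'v set \<Rightarrow> bool" where
  "clique V E K \<longleftrightarrow> K \<subseteq> V \<and> (\<forall>x\<in>K. \<forall>y\<in>K. x \<noteq> y \<longrightarrow> E x y)"

definition maximal_clique :: "'v set \<Rightarrow> ('v \<Rightarrow> 'v \<Rightarrow> bool) \<Rightarrow> 'v set \<Rightarrow> bool" where
  "maximal_clique V E K \<longleftrightarrow> clique V E K \<and> \<not> (\<exists>K'. clique V E K' \<and> K \<subset> K')"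

definition no_induced_diamond :: "'v set \<Rightarrow> ('v \<Rightarrow> 'v \<Rightarrow> bool) \<Rightarrow> bool" where
  "no_induced_diamond V E \<longleftrightarrow>
     \<not> (\<exists>a\<in>V. \<exists>b\<in>V. \<exists>c\<in>V. \<exists>d\<in>V. distinct [a, b, c, d] \<and>
          E a b \<and> E a c \<and> E a d \<and> E b c \<and> E b d \<and> \<not> E c d)"

text \<open>The rim is encoded by an enumeration c of the vertices along the Hamiltonian
  cycle: c 0, c 1, ..., c (n-1), with n = card V; c i and c ((i+1) mod n) are consecutive.\<close>

definition consecutive :: "'v set \<Rightarrow> (nat \<Rightarrow> 'v) \<Rightarrow> 'v \<Rightarrow> 'v \<Rightarrow> bool" where
  "consecutive V c x y \<longleftrightarrow> (\<exists>i < card V. {x, y} = {c i, c (Suc i mod card V)})"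

definition hamiltonian_rim :: "'v set \<Rightarrow> ('v \<Rightarrow> 'v \<Rightarrow> bool) \<Rightarrow> (nat \<Rightarrow> 'v) \<Rightarrow> bool" where
  "hamiltonian_rim V E c \<longleftrightarrow> card V \<ge> 3 \<and> bij_betw c {..<card V} V \<and>
     {K. maximal_clique V E K \<and> card K = 2} = {{c i, c (Suc i mod card V)} | i. i < card V}"

definition inscribed :: "'v set \<Rightarrow> ('v \<Rightarrow> 'v \<Rightarrow> bool) \<Rightarrow> 'v set set" where
  "inscribed V E = {K. maximal_clique V E K \<and> card K \<noteq> 2}"

definition multisun :: "'v set \<Rightarrow> ('v \<Rightarrow> 'v \<Rightarrow> bool) \<Rightarrow> (nat \<Rightarrow> 'v) \<Rightarrow> bool" where
  "multisun V E c \<longleftrightarrow> graph V E \<and> no_induced_diamond V E \<and> odd (card V) \<and>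
     hamiltonian_rim V E c \<and>
     (\<forall>K \<in> inscribed V E. \<forall>x\<in>K. \<forall>y\<in>K. x \<noteq> y \<longrightarrow> \<not> consecutive V c x y)"

definition delete_cliques :: "('v \<Rightarrow> 'v \<Rightarrow> bool) \<Rightarrow> 'v set set \<Rightarrow> 'v \<Rightarrow> 'v \<Rightarrow> bool" where
  "delete_cliques E S = (\<lambda>x y. E x y \<and> \<not> (\<exists>K\<in>S. x \<in> K \<and> y \<in> K))"

text \<open>The subpath of the rim starting at position i with k+1 vertices
  c i, c ((i+1) mod n), ..., c ((i+k) mod n), with 1 <= k < n, whose internal
  vertices lie in no inscribed clique.\<close>

definition rim_path :: "'v set \<Rightarrow> ('v \<Rightarrow> 'v \<Rightarrow> bool) \<Rightarrow> (nat \<Rightarrow> 'v) \<Rightarrow> nat \<Rightarrow> nat \<Rightarrow> bool" where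
  "rim_path V E c i k \<longleftrightarrow> i < card V \<and> 1 \<le> k \<and> k < card V \<and>
     (\<forall>j. 0 < j \<and> j < k \<longrightarrow> c ((i + j) mod card V) \<notin> \<Union> (inscribed V E))"

definition path_end :: "'v set \<Rightarrow> (nat \<Rightarrow> 'v) \<Rightarrow> nat \<Rightarrow> nat \<Rightarrow> 'v" where
  "path_end V c i k = c ((i + k) mod card V)"

definition AB_path :: "'v set \<Rightarrow> ('v \<Rightarrow> 'v \<Rightarrow> bool) \<Rightarrow> (nat \<Rightarrow> 'v) \<Rightarrow> 'v set \<Rightarrow> 'v set
    \<Rightarrow> nat \<Rightarrow> nat \<Rightarrow> bool" where
  "AB_path V E c A B i k \<longleftrightarrow> rim_path V E c i k \<and>
     ((c i \<in> A \<and> path_end V c i k \<in> B) \<or> (c i \<in> B \<and> path_end V c i k \<in> A))"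

definition Av_path :: "'v set \<Rightarrow> ('v \<Rightarrow> 'v \<Rightarrow> bool) \<Rightarrow> (nat \<Rightarrow> 'v) \<Rightarrow> 'v set \<Rightarrow> 'v
    \<Rightarrow> nat \<Rightarrow> nat \<Rightarrow> bool" where
  "Av_path V E c A v i k \<longleftrightarrow> (\<exists>B \<in> inscribed V E. v \<in> B \<and> rim_path V E c i k \<and>
     ((c i \<in> A \<and> path_end V c i k = v) \<or> (c i = v \<and> path_end V c i k \<in> A)))"

definition N1 :: "'v set \<Rightarrow> ('v \<Rightarrow> 'v \<Rightarrow> bool) \<Rightarrow> (nat \<Rightarrow> 'v) \<Rightarrow> bool" where
  "N1 V E c \<longleftrightarrow> (\<forall>A \<in> inscribed V E. \<forall>i k. AB_path V E c A A i k \<longrightarrow> even (k + 1) \<and> k + 1 \<ge> 4)"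

definition N2 :: "'v set \<Rightarrow> ('v \<Rightarrow> 'v \<Rightarrow> bool) \<Rightarrow> bool" where
  "N2 V E \<longleftrightarrow> (\<forall>A \<in> inscribed V E. odd (card A))"

definition N3 :: "'v set \<Rightarrow> ('v \<Rightarrow> 'v \<Rightarrow> bool) \<Rightarrow> 'v \<Rightarrow> bool" where
  "N3 V E \<xi> \<longleftrightarrow> \<xi> \<in> V \<and> (\<forall>A \<in> inscribed V E. \<xi> \<in> A) \<and>
     (\<forall>A \<in> inscribed V E. \<forall>B \<in> inscribed V E. A \<noteq> B \<longrightarrow> A \<inter> B = {\<xi>})"

definition N4 :: "'v set \<Rightarrow> ('v \<Rightarrow> 'v \<Rightarrow> bool) \<Rightarrow> (nat \<Rightarrow> 'v) \<Rightarrow> 'v \<Rightarrow> bool" where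
  "N4 V E c \<xi> \<longleftrightarrow> (\<forall>A \<in> inscribed V E. \<forall>i k. Av_path V E c A \<xi> i k \<longrightarrow> even (k + 1))"

definition N5 :: "'v set \<Rightarrow> ('v \<Rightarrow> 'v \<Rightarrow> bool) \<Rightarrow> (nat \<Rightarrow> 'v) \<Rightarrow> 'v \<Rightarrow> bool" where
  "N5 V E c \<xi> \<longleftrightarrow> (\<forall>A \<in> inscribed V E. \<forall>B \<in> inscribed V E. A \<noteq> B \<longrightarrow>
     (\<forall>i k. AB_path V E c A B i k \<and> c i \<noteq> \<xi> \<and> path_end V c i k \<noteq> \<xi> \<longrightarrow> odd (k + 1)))"

definition N_conditions :: "'v set \<Rightarrow> ('v \<Rightarrow> 'v \<Rightarrow> bool) \<Rightarrow> (nat \<Rightarrow> 'v) \<Rightarrow> bool" where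
  "N_conditions V E c \<longleftrightarrow> N1 V E c \<and> N2 V E \<and>
     (\<exists>\<xi>. N3 V E \<xi> \<and> N4 V E c \<xi> \<and> N5 V E c \<xi>)"

definition sunoid :: "'v set \<Rightarrow> ('v \<Rightarrow> 'v \<Rightarrow> bool) \<Rightarrow> (nat \<Rightarrow> 'v) \<Rightarrow> bool" where
  "sunoid V E c \<longleftrightarrow> multisun V E c \<and> N_conditions V E c \<and>
     (\<forall>S. S \<subset> inscribed V E \<longrightarrow> N_conditions V (delete_cliques E S) c)"

text \<open>Letters: the distinguished letter epsilon, sigma, and proper letters.
  The proper letter specific to the inscribed clique X is Prp X.\<close>

datatype 'a letter = Emp | Sig | Prp 'a

definition proper :: "'a letter \<Rightarrow> bool" where
  "proper x \<longleftrightarrow> (\<exists>X. x = Prp X)"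

fun pat :: "'a letter list \<Rightarrow> 'a letter list" where
  "pat [] = []"
| "pat (Emp # Emp # xs) = pat xs"
| "pat (x # xs) = x # pat xs"

definition cyc_equiv :: "'a list \<Rightarrow> 'a list \<Rightarrow> bool" where
  "cyc_equiv v w \<longleftrightarrow> (\<exists>k. v = rotate k w \<or> v = rev (rotate k w))"

definition approx :: "'a letter list \<Rightarrow> 'a letter list \<Rightarrow> bool" where
  "approx u v \<longleftrightarrow> cyc_equiv (pat u) (pat v)"

definition word_class :: "'a letter list \<Rightarrow> 'a letter list set" where
  "word_class w = {u. approx u w}"

definition label :: "'v set \<Rightarrow> ('v \<Rightarrow> 'v \<Rightarrow> bool) \<Rightarrow> 'v \<Rightarrow> 'v set letter" where
  "label V E v =
     (if card {K \<in> inscribed V E. v \<in> K} \<ge> 2 then Sig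
      else if (\<exists>K \<in> inscribed V E. v \<in> K) then Prp (THE K. K \<in> inscribed V E \<and> v \<in> K)
      else Emp)"

definition rim_word :: "'v set \<Rightarrow> ('v \<Rightarrow> 'v \<Rightarrow> bool) \<Rightarrow> (nat \<Rightarrow> 'v) \<Rightarrow> 'v set letter list" where
  "rim_word V E c = map (\<lambda>i. label V E (c i)) [0..<card V]"

definition sunword :: "'v set letter list set \<Rightarrow> bool" where
  "sunword W \<longleftrightarrow> (\<exists>V E c. sunoid V E c \<and> W = word_class (rim_word V E c))"

definition alphabet :: "'a letter list set \<Rightarrow> 'a letter set" where
  "alphabet W = \<Union> (set ` W)"

fun expand :: "'a letter list \<Rightarrow> 'a letter list" where
  "expand (x # y # xs) =
     (if x = y \<and> proper x then x # Emp # Emp # expand (y # xs) else x # expand (y # xs))"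
| "expand xs = xs"

definition cyc_dist :: "'a letter list \<Rightarrow> 'a letter \<Rightarrow> nat" where
  "cyc_dist v x = Min {min i (length v - i) | i. i < length v \<and> v ! i = x}"

text \<open>Order induced from a representative Sig # u equal to its own pattern; position 1
  of the paper is index 0 here.\<close>

definition prec_from :: "'a letter list \<Rightarrow> 'a letter \<Rightarrow> 'a letter \<Rightarrow> bool" where
  "prec_from u x y \<longleftrightarrow>
     (let v = Sig # Emp # Emp # expand u @ [Emp, Emp] in
       (x = Sig \<and> proper y \<and> y \<in> set u) \<or>
       (proper x \<and> proper y \<and> x \<in> set u \<and> y \<in> set u \<and> x \<noteq> y \<and> cyc_dist v x < cyc_dist v y))"

definition induced_prec :: "'a letter list set \<Rightarrow> 'a letter \<Rightarrow> 'a letter \<Rightarrow> bool" where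
  "induced_prec W x y \<longleftrightarrow>
     (\<exists>u. Sig # u \<in> W \<and> pat (Sig # u) = Sig # u \<and> prec_from u x y)"

definition exponents_even :: "'a list \<Rightarrow> 'a \<Rightarrow> bool" where
  "exponents_even w z \<longleftrightarrow>
     (\<forall>i j. i \<le> j \<and> j < length w \<and> (\<forall>k. i \<le> k \<and> k \<le> j \<longrightarrow> w ! k = z) \<and>
        (i = 0 \<or> w ! (i - 1) \<noteq> z) \<and> (Suc j = length w \<or> w ! Suc j \<noteq> z)
        \<longrightarrow> even (Suc j - i))"

end

theory Submission
  imports Defs
begin


definition Pw :: "'a letter list \<Rightarrow> bool" where
 "Pw w \<longleftrightarrow> (\<exists>t. w = Sig # t \<and> Sig \<notin> set t) \<and> odd (length w) \<and>
   (\<forall>X m s. proper X \<longrightarrow> w = Sig # m @ X # s \<longrightarrow> X \<notin> set m \<longrightarrow> even (length m)) \<and>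
   (\<forall>X p m s. proper X \<longrightarrow> w = p @ X # m @ X # s \<longrightarrow> X \<notin> set m \<longrightarrow> even (length m)) \<and>
   (\<forall>X p m. proper X \<longrightarrow> w = p @ X # m \<longrightarrow> X \<notin> set m \<longrightarrow> even (length m)) \<and>
   (\<forall>X Y p m s. proper X \<longrightarrow> proper Y \<longrightarrow> X \<noteq> Y \<longrightarrow> w = p @ X # m @ Y # s \<longrightarrow>
        X \<notin> set m \<longrightarrow> Y \<notin> set m \<longrightarrow> odd (length m))"

definition INV :: "'a letter list \<Rightarrow> bool" where
 "INV x \<longleftrightarrow> (\<forall>s t. x = s @ Sig # t \<longrightarrow> Pw (Sig # t @ s))"

definition ins :: "'a letter list \<Rightarrow> 'a letter list \<Rightarrow> bool" where
 "ins l l' \<longleftrightarrow> (\<exists>\<alpha> \<beta>. l = \<alpha> @ \<beta> \<and> l' = \<alpha> @ Emp # Emp # \<beta>)"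

lemma ins_set: "ins m m' \<Longrightarrow> set m' \<subseteq> insert Emp (set m)"
  unfolding ins_def by auto

lemma ins_len: "ins m m' \<Longrightarrow> length m' = length m + 2"
  unfolding ins_def by auto

lemma ins_split_cons:
  assumes "ins (p @ X # q) l'" "X \<noteq> Emp"
  shows "(\<exists>p'. ins p p' \<and> l' = p' @ X # q) \<or> (\<exists>q'. ins q q' \<and> l' = p @ X # q')"
proof -
  obtain \<alpha> \<beta> where ab: "p @ X # q = \<alpha> @ \<beta>" "l' = \<alpha> @ Emp # Emp # \<beta>"
    using assms(1) unfolding ins_def by blast
  from ab(1) obtain us where "p = \<alpha> @ us \<and> us @ X # q = \<beta> \<or> p @ us = \<alpha> \<and> X # q = us @ \<beta>"
    by (auto simp: append_eq_append_conv2)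
  then show ?thesis
  proof
    assume h: "p = \<alpha> @ us \<and> us @ X # q = \<beta>"
    have "ins p (\<alpha> @ Emp # Emp # us)" using h unfolding ins_def by blast
    moreover have "l' = (\<alpha> @ Emp # Emp # us) @ X # q" using h ab by simp
    ultimately show ?thesis by blast
  next
    assume h: "p @ us = \<alpha> \<and> X # q = us @ \<beta>"
    show ?thesis
    proof (cases us)
      case Nil
      then have "ins p (p @ [Emp, Emp])" unfolding ins_def by force
      moreover have "l' = (p @ [Emp, Emp]) @ X # q" using h ab Nil by simp
      ultimately show ?thesis by blast
    next
      case (Cons u us')
      then have "u = X" "q = us' @ \<beta>" using h by auto
      then have "ins q (us' @ Emp # Emp # \<beta>)" unfolding ins_def by blast
      moreover have "l' = p @ X # (us' @ Emp # Emp # \<beta>)" using h ab Cons \<open>u = X\<close> by simp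
      ultimately show ?thesis by blast
    qed
  qed
qed

lemma proper_ne: "proper X \<Longrightarrow> X \<noteq> Emp \<and> X \<noteq> Sig"
  unfolding proper_def by auto

lemma Pw_del:
  assumes "ins w w'" "Pw w'"
  shows "Pw w"
proof -
  obtain \<alpha> \<beta> where ab: "w = \<alpha> @ \<beta>" "w' = \<alpha> @ Emp # Emp # \<beta>"
    using assms(1) unfolding ins_def by blast
  obtain t' where t': "w' = Sig # t'" "Sig \<notin> set t'" using assms(2) unfolding Pw_def by blast
  obtain \<alpha>0 where a0: "\<alpha> = Sig # \<alpha>0" using ab t' by (cases \<alpha>) auto
  have A: "\<exists>t. w = Sig # t \<and> Sig \<notin> set t" using ab a0 t' by auto
  have B: "odd (length w)" using assms(2) ab unfolding Pw_def by simp
  note P = assms(2)[unfolded Pw_def]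
  have L1: "even (length m)" if "proper X" "w = Sig # m @ X # s" "X \<notin> set m" for X m s
  proof -
    have "ins (m @ X # s) (\<alpha>0 @ Emp # Emp # \<beta>)" using that ab a0 unfolding ins_def by (metis append_Cons list.inject)
    from ins_split_cons[OF this] proper_ne[OF that(1)]
    consider m' where "ins m m'" "\<alpha>0 @ Emp # Emp # \<beta> = m' @ X # s"
      | s' where "\<alpha>0 @ Emp # Emp # \<beta> = m @ X # s'" by blast
    then show ?thesis
    proof cases
      case 1
      then have "w' = Sig # m' @ X # s" using ab a0 by simp
      moreover have "X \<notin> set m'" using ins_set[OF 1(1)] that proper_ne[OF that(1)] by auto
      ultimately have "even (length m')" using P that by blast
      then show ?thesis using ins_len[OF 1(1)] by simp
    next
      case 2
      then have "w' = Sig # m @ X # s'" using ab a0 by simp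
      then show ?thesis using P that by blast
    qed
  qed
  have L2: "even (length m)" if "proper X" "w = p @ X # m @ X # s" "X \<notin> set m" for X p m s
  proof -
    have i: "ins (p @ X # (m @ X # s)) w'" using that ab unfolding ins_def by blast
    from ins_split_cons[OF i] proper_ne[OF that(1)]
    consider p' where "w' = p' @ X # m @ X # s"
      | q' where "ins (m @ X # s) q'" "w' = p @ X # q'" by blast
    then show ?thesis
    proof cases
      case 1 then show ?thesis using P that by blast
    next
      case 2
      from ins_split_cons[OF 2(1)] proper_ne[OF that(1)]
      consider m' where "ins m m'" "q' = m' @ X # s" | s' where "q' = m @ X # s'" by blast
      then show ?thesis
      proof cases
        case 1
        have "X \<notin> set m'" using ins_set[OF 1(1)] that proper_ne[OF that(1)] by auto
        then have "even (length m')" using P that 2 1 by blast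
        then show ?thesis using ins_len[OF 1(1)] by simp
      next
        case 3: 2
        then show ?thesis using P that 2 by blast
      qed
    qed
  qed
  have L3: "even (length m)" if "proper X" "w = p @ X # m" "X \<notin> set m" for X p m
  proof -
    have i: "ins (p @ X # m) w'" using that ab unfolding ins_def by blast
    from ins_split_cons[OF i] proper_ne[OF that(1)]
    consider p' where "w' = p' @ X # m"
      | m' where "ins m m'" "w' = p @ X # m'" by blast
    then show ?thesis
    proof cases
      case 1 then show ?thesis using P that by blast
    next
      case 2
      have "X \<notin> set m'" using ins_set[OF 2(1)] that proper_ne[OF that(1)] by auto
      then have "even (length m')" using P that 2 by blast
      then show ?thesis using ins_len[OF 2(1)] by simp
    qed
  qed
  have L4: "odd (length m)" if "proper X" "proper Y" "X \<noteq> Y" "w = p @ X # m @ Y # s"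
     "X \<notin> set m" "Y \<notin> set m" for X Y p m s
  proof -
    have i: "ins (p @ X # (m @ Y # s)) w'" using that ab unfolding ins_def by blast
    from ins_split_cons[OF i] proper_ne[OF that(1)]
    consider p' where "w' = p' @ X # m @ Y # s"
      | q' where "ins (m @ Y # s) q'" "w' = p @ X # q'" by blast
    then show ?thesis
    proof cases
      case 1 then show ?thesis using P that by blast
    next
      case 2
      from ins_split_cons[OF 2(1)] proper_ne[OF that(2)]
      consider m' where "ins m m'" "q' = m' @ Y # s" | s' where "q' = m @ Y # s'" by blast
      then show ?thesis
      proof cases
        case 1
        have "X \<notin> set m'" "Y \<notin> set m'" using ins_set[OF 1(1)] that proper_ne[OF that(1)] proper_ne[OF that(2)] by auto
        then have "odd (length m')" using P that 2 1 by blast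
        then show ?thesis using ins_len[OF 1(1)] by simp
      next
        case 3: 2
        then show ?thesis using P that 2 by blast
      qed
    qed
  qed
  show ?thesis unfolding Pw_def using A B L1 L2 L3 L4 by blast
qed

lemma PwD0: "Pw w \<Longrightarrow> \<exists>t. w = Sig # t \<and> Sig \<notin> set t" unfolding Pw_def by blast
lemma PwDodd: "Pw w \<Longrightarrow> odd (length w)" unfolding Pw_def by blast
lemma PwD1: "Pw w \<Longrightarrow> proper X \<Longrightarrow> w = Sig # m @ X # s \<Longrightarrow> X \<notin> set m \<Longrightarrow> even (length m)"
  unfolding Pw_def by blast
lemma PwD2: "Pw w \<Longrightarrow> proper X \<Longrightarrow> w = p @ X # m @ X # s \<Longrightarrow> X \<notin> set m \<Longrightarrow> even (length m)"
  unfolding Pw_def by blast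
lemma PwD3: "Pw w \<Longrightarrow> proper X \<Longrightarrow> w = p @ X # m \<Longrightarrow> X \<notin> set m \<Longrightarrow> even (length m)"
  unfolding Pw_def by blast
lemma PwD4: "Pw w \<Longrightarrow> proper X \<Longrightarrow> proper Y \<Longrightarrow> X \<noteq> Y \<Longrightarrow> w = p @ X # m @ Y # s \<Longrightarrow>
        X \<notin> set m \<Longrightarrow> Y \<notin> set m \<Longrightarrow> odd (length m)"
  unfolding Pw_def by blast

lemma Cons_app_proper:
  assumes "Sig # t = p @ X # q" "proper X"
  shows "\<exists>p'. p = Sig # p' \<and> t = p' @ X # q"
  using assms proper_ne[OF assms(2)] by (cases p) auto

lemma Pw_rev:
  assumes P: "Pw (Sig # t)"
  shows "Pw (Sig # rev t)"
proof -
  have A: "\<exists>t'. Sig # rev t = Sig # t' \<and> Sig \<notin> set t'" using PwD0[OF P] by auto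
  have B: "odd (length (Sig # rev t))" using PwDodd[OF P] by simp
  have L1: "even (length m)" if "proper X" "Sig # rev t = Sig # m @ X # s" "X \<notin> set m" for X m s
  proof -
    have "rev t = m @ X # s" using that(2) by simp
    then have "t = rev (m @ X # s)" by (metis rev_rev_ident)
    then have "Sig # t = (Sig # rev s) @ X # rev m" by simp
    from PwD3[OF P that(1) this] that(3) show ?thesis by simp
  qed
  have L3: "even (length m)" if "proper X" "Sig # rev t = p @ X # m" "X \<notin> set m" for X p m
  proof -
    note h = that
    obtain p' where "p = Sig # p'" "rev t = p' @ X # m" using Cons_app_proper[OF h(2,1)] by blast
    then have "t = rev (p' @ X # m)" by (metis rev_rev_ident)
    then have "Sig # t = Sig # rev m @ X # rev p'" by simp
    from PwD1[OF P that(1) this] that(3) show ?thesis by simp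
  qed
  have L2: "even (length m)" if "proper X" "Sig # rev t = p @ X # m @ X # s" "X \<notin> set m" for X p m s
  proof -
    note h = that
    obtain p' where "p = Sig # p'" "rev t = p' @ X # m @ X # s" using Cons_app_proper[OF h(2,1)] by blast
    then have "t = rev (p' @ X # m @ X # s)" by (metis rev_rev_ident)
    then have "Sig # t = (Sig # rev s) @ X # rev m @ X # rev p'" by simp
    from PwD2[OF P that(1) this] that(3) show ?thesis by simp
  qed
  have L4: "odd (length m)" if "proper X" "proper Y" "X \<noteq> Y" "Sig # rev t = p @ X # m @ Y # s"
     "X \<notin> set m" "Y \<notin> set m" for X Y p m s
  proof -
    note h = that
    obtain p' where "p = Sig # p'" "rev t = p' @ X # m @ Y # s" using Cons_app_proper[OF h(4,1)] by blast
    then have "t = rev (p' @ X # m @ Y # s)" by (metis rev_rev_ident)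
    then have "Sig # t = (Sig # rev s) @ Y # rev m @ X # rev p'" by simp
    from PwD4[OF P that(2) that(1) _ this] that(3,5,6) show ?thesis by simp
  qed
  show ?thesis unfolding Pw_def using A B L1 L2 L3 L4 by blast
qed

lemma INV_rotate1: "INV x \<Longrightarrow> INV (rotate1 x)"
proof (cases x)
  case Nil
  then show "INV x \<Longrightarrow> INV (rotate1 x)" by simp
next
  case (Cons c xs)
  assume I: "INV x"
  show ?thesis unfolding INV_def
  proof (intro allI impI)
    fix s t assume h: "rotate1 x = s @ Sig # t"
    then have h2: "xs @ [c] = s @ Sig # t" using Cons by simp
    show "Pw (Sig # t @ s)"
    proof (cases t rule: rev_exhaust)
      case Nil
      then have "c = Sig" "xs = s" using h2 by auto
      then have "x = [] @ Sig # s" using Cons by simp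
      then show ?thesis using I Nil unfolding INV_def by fastforce
    next
      case (snoc t' d)
      then have "xs = s @ Sig # t'" "c = d" using h2 by auto
      then have "x = (c # s) @ Sig # t'" using Cons by simp
      then have "Pw (Sig # t' @ c # s)" using I unfolding INV_def by blast
      then show ?thesis using snoc \<open>c = d\<close> by simp
    qed
  qed
qed

lemma INV_rotate: "INV x \<Longrightarrow> INV (rotate k x)"
  by (induction k) (auto simp: INV_rotate1)

lemma INV_rev: "INV x \<Longrightarrow> INV (rev x)"
  unfolding INV_def
proof (intro allI impI)
  fix s t assume I: "\<forall>s t. x = s @ Sig # t \<longrightarrow> Pw (Sig # t @ s)" and h: "rev x = s @ Sig # t"
  then have "x = rev t @ Sig # rev s" by (metis rev_append rev_rev_ident rev.simps(2) append_assoc append_Cons append_Nil)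
  then have "Pw (Sig # rev s @ rev t)" using I by blast
  then have "Pw (Sig # rev (rev s @ rev t))" by (rule Pw_rev)
  then show "Pw (Sig # t @ s)" by simp
qed

lemma app_eq_split:
  assumes "a @ b = s @ x # t"
  shows "(\<exists>b1. s = a @ b1 \<and> b = b1 @ x # t) \<or> (\<exists>a2. a = s @ x # a2 \<and> t = a2 @ b)"
proof -
  from assms obtain us where "a = s @ us \<and> us @ b = x # t \<or> a @ us = s \<and> b = us @ x # t"
    by (auto simp: append_eq_append_conv2)
  then show ?thesis
  proof
    assume h: "a = s @ us \<and> us @ b = x # t"
    show ?thesis
    proof (cases us)
      case Nil then show ?thesis using h by auto
    next
      case (Cons u us') then show ?thesis using h by auto
    qed
  qed auto
qed

lemma INV_del: "INV (a @ Emp # Emp # b) \<Longrightarrow> INV (a @ b)"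
  unfolding INV_def
proof (intro allI impI)
  fix s t assume I: "\<forall>s t. a @ Emp # Emp # b = s @ Sig # t \<longrightarrow> Pw (Sig # t @ s)" and h: "a @ b = s @ Sig # t"
  from app_eq_split[OF h] show "Pw (Sig # t @ s)"
  proof
    assume "\<exists>b1. s = a @ b1 \<and> b = b1 @ Sig # t"
    then obtain b1 where b1: "s = a @ b1" "b = b1 @ Sig # t" by blast
    then have "a @ Emp # Emp # b = (a @ Emp # Emp # b1) @ Sig # t" by simp
    then have "Pw (Sig # t @ a @ Emp # Emp # b1)" using I by fastforce
    moreover have "ins (Sig # t @ s) (Sig # t @ a @ Emp # Emp # b1)"
      unfolding ins_def using b1 by (metis append_Cons append_assoc)
    ultimately show ?thesis using Pw_del by blast
  next
    assume "\<exists>a2. a = s @ Sig # a2 \<and> t = a2 @ b"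
    then obtain a2 where a2: "a = s @ Sig # a2" "t = a2 @ b" by blast
    then have "a @ Emp # Emp # b = s @ Sig # (a2 @ Emp # Emp # b)" by simp
    then have "Pw (Sig # (a2 @ Emp # Emp # b) @ s)" using I by blast
    moreover have "ins (Sig # t @ s) (Sig # (a2 @ Emp # Emp # b) @ s)"
      unfolding ins_def using a2 by (metis append_Cons append_assoc)
    ultimately show ?thesis using Pw_del by blast
  qed
qed

lemma INV_pat_gen: "INV (a @ xs) \<Longrightarrow> INV (a @ pat xs)"
proof (induction xs arbitrary: a rule: pat.induct)
  case 1 then show ?case by simp
next
  case (2 xs)
  then show ?case using INV_del by fastforce
next
  case ("3_1" xs)
  have "INV ((a @ [Sig]) @ pat xs)" using "3_1.IH"[of "a @ [Sig]"] "3_1.prems" by simp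
  then show ?case by simp
next
  case ("3_2" v xs)
  have "INV ((a @ [Prp v]) @ pat xs)" using "3_2.IH"[of "a @ [Prp v]"] "3_2.prems" by simp
  then show ?case by simp
next
  case ("3_3" x)
  have "INV ((a @ [x]) @ pat [])" using "3_3.IH"[of "a @ [x]"] "3_3.prems" by simp
  then show ?case by simp
next
  case ("3_4" x va)
  have "INV ((a @ [x]) @ pat (Sig # va))" using "3_4.IH"[of "a @ [x]"] "3_4.prems" by simp
  then show ?case by simp
next
  case ("3_5" x vb va)
  have "INV ((a @ [x]) @ pat (Prp vb # va))" using "3_5.IH"[of "a @ [x]"] "3_5.prems" by simp
  then show ?case by simp
qed

lemma INV_pat: "INV xs \<Longrightarrow> INV (pat xs)"
  using INV_pat_gen[of "[]"] by simp



lemma P1a: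
  assumes P: "Pw w" and X: "proper X"
  shows "w = p @ X # s \<Longrightarrow> (odd (length p) \<longleftrightarrow> even (count_list p X))"
proof (induction p arbitrary: s rule: length_induct)
  case (1 p)
  note IH = 1(1) and h = 1(2)
  show ?case
  proof (cases "X \<in> set p")
    case False
    obtain t where t: "w = Sig # t" using PwD0[OF P] by blast
    obtain p' where p': "p = Sig # p'" "t = p' @ X # s" using Cons_app_proper[of t p X s] h t X by auto
    have "X \<notin> set p'" using False p' by simp
    then have "even (length p')" using PwD1[OF P X, of p' s] t p' by simp
    moreover have "count_list p X = 0" using False by (simp add: count_list_0_iff)
    ultimately show ?thesis using p' by simp
  next
    case True
    obtain p1 m where pm: "p = p1 @ X # m" "X \<notin> set m" using split_list_last[OF True] by blast
    have "w = p1 @ X # m @ X # s" using h pm by simp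
    then have "even (length m)" using PwD2[OF P X] pm by blast
    moreover have "odd (length p1) \<longleftrightarrow> even (count_list p1 X)"
      using IH[rule_format, of p1 "m @ X # s"] h pm by simp
    moreover have "count_list m X = 0" using pm by (simp add: count_list_0_iff)
    ultimately show ?thesis using pm by (simp add: count_list_append)
  qed
qed

lemma even_count:
  assumes P: "Pw w" and X: "proper X"
  shows "even (count_list w X)"
proof (cases "X \<in> set w")
  case False then show ?thesis by (simp add: count_list_0_iff)
next
  case True
  obtain p m where pm: "w = p @ X # m" "X \<notin> set m" using split_list_last[OF True] by blast
  have "even (length m)" using PwD3[OF P X pm] .
  moreover have "odd (length w)" using PwDodd[OF P] .
  ultimately have "even (length p)" using pm by simp
  then have "odd (count_list p X)" using P1a[OF P X pm(1)] by simp
  moreover have "count_list m X = 0" using pm by (simp add: count_list_0_iff)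
  ultimately show ?thesis using pm by (simp add: count_list_append)
qed

lemma prefix_first:
  assumes "m @ L # s = m1 @ L # m2" "L \<notin> set m1"
  shows "set m1 \<subseteq> set m"
proof -
  from assms(1) obtain us where "m = m1 @ us \<and> us @ L # s = L # m2 \<or> m @ us = m1 \<and> L # s = us @ L # m2"
    by (auto simp: append_eq_append_conv2)
  then show ?thesis
  proof
    assume "m = m1 @ us \<and> us @ L # s = L # m2" then show ?thesis by auto
  next
    assume h: "m @ us = m1 \<and> L # s = us @ L # m2"
    show ?thesis
    proof (cases us)
      case Nil then show ?thesis using h by auto
    next
      case (Cons u us') then have "L \<in> set m1" using h by auto
      then show ?thesis using assms by simp
    qed
  qed
qed

lemma Clemma:
  assumes P: "Pw w" and L: "proper L" and Oth: "proper Oth" and LO: "L \<noteq> Oth"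
  shows "w = p @ L # s \<Longrightarrow> (even (count_list p Oth) \<longleftrightarrow> hd (filter (\<lambda>c. c \<in> {L, Oth}) w) \<noteq> Oth)"
  using L Oth LO
proof (induction p arbitrary: s L Oth rule: length_induct)
  case (1 p)
  note IH = 1(1) and h = 1(2) and L = 1(3) and Oth = 1(4) and LO = 1(5)
  show ?case
  proof (cases "Oth \<in> set p")
    case False
    have "count_list p Oth = 0" using False by (simp add: count_list_0_iff)
    moreover have "hd (filter (\<lambda>c. c \<in> {L, Oth}) w) = L"
    proof (cases "filter (\<lambda>c. c \<in> {L, Oth}) p")
      case Nil then show ?thesis using h by simp
    next
      case (Cons f fs)
      then have "f \<in> set (filter (\<lambda>c. c \<in> {L, Oth}) p)" by simp
      then have "f = L" using False by auto
      then show ?thesis using h Cons by simp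
    qed
    ultimately show ?thesis using LO by simp
  next
    case True
    obtain p1 m where pm: "p = p1 @ Oth # m" "Oth \<notin> set m" using split_list_last[OF True] by blast
    have "L \<in> set (m @ L # s)" by simp
    then obtain m1 m2 where mm: "m @ L # s = m1 @ L # m2" "L \<notin> set m1" using split_list_first by metis
    have "Oth \<notin> set m1" using prefix_first[OF mm] pm by auto
    have w1: "w = p1 @ Oth # m1 @ L # m2" using h pm mm by simp
    have "odd (length m1)" using PwD4[OF P Oth L LO[symmetric] w1 \<open>Oth \<notin> set m1\<close> mm(2)] .
    have e1: "odd (length p1) \<longleftrightarrow> even (count_list p1 Oth)" using P1a[OF P Oth, of p1] w1 by simp
    have e2: "odd (length (p1 @ Oth # m1)) \<longleftrightarrow> even (count_list (p1 @ Oth # m1) L)"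
      using P1a[OF P L, of "p1 @ Oth # m1" m2] w1 by simp
    have c2: "count_list (p1 @ Oth # m1) L = count_list p1 L"
      using mm(2) LO by (simp add: count_list_append count_list_0_iff)
    have len1: "p1 \<noteq> p" "length p1 < length p" using pm by auto
    have IH1: "even (count_list p1 L) \<longleftrightarrow> hd (filter (\<lambda>c. c \<in> {Oth, L}) w) \<noteq> L"
      using IH[rule_format, OF len1(2), of Oth "m1 @ L # m2" L] w1 Oth L LO by simp
    have fe: "filter (\<lambda>c. c \<in> {Oth, L}) w = filter (\<lambda>c. c \<in> {L, Oth}) w" by (metis insert_commute)
    have hdin: "hd (filter (\<lambda>c. c \<in> {L, Oth}) w) \<in> {L, Oth}"
    proof -
      have "filter (\<lambda>c. c \<in> {L, Oth}) w \<noteq> []" using h by simp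
      then show ?thesis using hd_in_set by fastforce
    qed
    have cp: "count_list p Oth = count_list p1 Oth + 1"
      using pm by (simp add: count_list_append count_list_0_iff)
    show ?thesis using e1 e2 c2 IH1 fe hdin cp \<open>odd (length m1)\<close> LO by auto
  qed
qed

lemma first_last:
  assumes P: "Pw w" and X: "proper X" and Y: "proper Y" and XY: "X \<noteq> Y" and ex: "X \<in> set w"
  shows "last (filter (\<lambda>c. c \<in> {X, Y}) w) = hd (filter (\<lambda>c. c \<in> {X, Y}) w)"
proof -
  have "\<exists>x\<in>set w. x \<in> {X, Y}" using ex by blast
  then obtain p L s where pLs: "w = p @ L # s" "L \<in> {X, Y}" "\<forall>z\<in>set s. z \<notin> {X, Y}"
    using split_list_last_prop[of w "\<lambda>c. c \<in> {X, Y}"] by blast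
  define Oth where "Oth = (if L = X then Y else X)"
  have LO: "L \<noteq> Oth" "{L, Oth} = {X, Y}" "proper L" "proper Oth" using pLs(2) XY X Y unfolding Oth_def by auto
  have fs: "filter (\<lambda>c. c \<in> {X, Y}) s = []" using pLs(3) by (simp add: filter_empty_conv)
  have "Oth \<notin> set s" using pLs(3) LO(2) by auto
  then have "count_list w Oth = count_list p Oth" using pLs(1) LO(1) by (simp add: count_list_append count_list_0_iff)
  then have "even (count_list p Oth)" using even_count[OF P LO(4)] by simp
  then have "hd (filter (\<lambda>c. c \<in> {L, Oth}) w) \<noteq> Oth" using Clemma[OF P LO(3) LO(4) LO(1) pLs(1)] by simp
  moreover have "hd (filter (\<lambda>c. c \<in> {L, Oth}) w) \<in> {L, Oth}"
  proof -
    have "filter (\<lambda>c. c \<in> {L, Oth}) w \<noteq> []" using pLs(1) by simp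
    then show ?thesis using hd_in_set by fastforce
  qed
  ultimately have "hd (filter (\<lambda>c. c \<in> {X, Y}) w) = L" using LO(2) by auto
  moreover have "last (filter (\<lambda>c. c \<in> {X, Y}) w) = L" using pLs fs by simp
  ultimately show ?thesis by simp
qed



lemma pat_len: "length (pat xs) \<le> length xs"
  by (induction xs rule: pat.induct) auto

lemma pat_noEE: "xs = p @ Emp # Emp # q \<Longrightarrow> length (pat xs) < length xs"
proof (induction xs arbitrary: p rule: pat.induct)
  case 1 then show ?case by simp
next
  case (2 xs) show ?case using pat_len[of xs] by simp
next
  case ("3_1" xs) then show ?case by (cases p) auto
next
  case ("3_2" v xs) then show ?case by (cases p) auto
next
  case ("3_3" x) then show ?case by (cases p) auto
next
  case ("3_4" x va)
  then obtain p' where "p = x # p'" "Sig # va = p' @ Emp # Emp # q" by (cases p) auto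
  then have "length (pat (Sig # va)) < length (Sig # va)" using "3_4.IH"[of p'] by simp
  then show ?case by simp
next
  case ("3_5" x vb va)
  then obtain p' where "p = x # p'" "Prp vb # va = p' @ Emp # Emp # q" by (cases p) auto
  then have "length (pat (Prp vb # va)) < length (Prp vb # va)" using "3_5.IH"[of p'] by simp
  then show ?case by simp
qed

lemma pat_fixed_noEE: "pat xs = xs \<Longrightarrow> xs \<noteq> p @ Emp # Emp # q"
  using pat_noEE by fastforce

lemma split_run:
  assumes "i \<le> j" "j < length w" "\<forall>k. i \<le> k \<and> k \<le> j \<longrightarrow> w ! k = z"
  shows "w = take i w @ replicate (Suc j - i) z @ drop (Suc j) w"
proof -
  have "take (Suc j - i) (drop i w) = replicate (Suc j - i) z"
    by (rule nth_equalityI) (use assms in auto)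
  moreover have "w = take i w @ take (Suc j - i) (drop i w) @ drop (Suc j - i) (drop i w)"
    by (metis append_take_drop_id)
  moreover have "Suc j - i + i = Suc j" using assms by simp
  then have "drop (Suc j - i) (drop i w) = drop (Suc j) w" by simp
  ultimately show ?thesis by metis
qed

lemma left_nb:
  assumes nE: "\<And>p q. w \<noteq> p @ Emp # Emp # q" and w: "w = \<alpha> @ R" and a0: "\<alpha> \<noteq> []"
    and h0: "hd \<alpha> \<noteq> Emp"
  shows "\<exists>\<alpha>1 y e. \<alpha> = \<alpha>1 @ y # e \<and> (e = [] \<or> e = [Emp]) \<and> y \<noteq> Emp"
proof -
  obtain \<alpha>' l where al: "\<alpha> = \<alpha>' @ [l]" using a0 by (metis rev_exhaust)
  show ?thesis
  proof (cases "l = Emp")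
    case False then show ?thesis using al by blast
  next
    case True
    have "\<alpha>' \<noteq> []" using al h0 True by auto
    then obtain \<alpha>1 y where a1: "\<alpha>' = \<alpha>1 @ [y]" by (metis rev_exhaust)
    have "y \<noteq> Emp" using nE[of \<alpha>1 R] w al a1 True by auto
    then show ?thesis using al a1 True by auto
  qed
qed

lemma right_nb:
  assumes nE: "\<And>p q. w \<noteq> p @ Emp # Emp # q" and w: "w = L @ \<beta>" and b0: "\<beta> \<noteq> []"
    and h0: "last \<beta> \<noteq> Emp"
  shows "\<exists>\<beta>1 y e. \<beta> = e @ y # \<beta>1 \<and> (e = [] \<or> e = [Emp]) \<and> y \<noteq> Emp"
proof -
  obtain l \<beta>' where bl: "\<beta> = l # \<beta>'" using b0 by (cases \<beta>) auto
  show ?thesis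
  proof (cases "l = Emp")
    case False then show ?thesis using bl by blast
  next
    case True
    have "\<beta>' \<noteq> []" using bl h0 True by auto
    then obtain y \<beta>1 where b1: "\<beta>' = y # \<beta>1" by (cases \<beta>') auto
    have "y \<noteq> Emp" using nE[of L \<beta>1] w bl b1 True by auto
    then have "\<beta> = [Emp] @ y # \<beta>1" using bl b1 True by simp
    then show ?thesis using \<open>y \<noteq> Emp\<close> by blast
  qed
qed

lemma letter_cases: "x \<noteq> Emp \<Longrightarrow> x \<noteq> Sig \<Longrightarrow> proper x"
  unfolding proper_def by (cases x) auto

lemma run_lemma:
  assumes P: "Pw w" and pw: "pat w = w"
    and w: "w = [Sig] @ replicate l1 a @ [Emp] @ wt @ [Emp] @ replicate ls a"
    and l1: "l1 \<ge> 1" and ls: "ls \<ge> 1" and a: "proper a" and z: "proper z" and za: "z \<noteq> a"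
    and ne: "\<not> exponents_even w z"
  shows "\<exists>y. proper y \<and> y \<noteq> z \<and> y \<in> set w \<and> hd (filter (\<lambda>c. c \<in> {z, y}) w) = z
              \<and> last (filter (\<lambda>c. c \<in> {z, y}) w) = z"
proof -
  have nE: "\<And>p q. w \<noteq> p @ Emp # Emp # q" using pat_fixed_noEE[OF pw] by blast
  obtain i j where ij: "i \<le> j" "j < length w" "\<forall>k. i \<le> k \<and> k \<le> j \<longrightarrow> w ! k = z"
     "i = 0 \<or> w ! (i - 1) \<noteq> z" "Suc j = length w \<or> w ! Suc j \<noteq> z" "odd (Suc j - i)"
    using ne unfolding exponents_even_def by blast
  define m where "m = Suc j - i"
  define \<alpha> where "\<alpha> = take i w"
  define \<beta> where "\<beta> = drop (Suc j) w"
  have wd: "w = \<alpha> @ replicate m z @ \<beta>" using split_run[OF ij(1-3)] unfolding \<alpha>_def \<beta>_def m_def .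
  have modd: "odd m" using ij(6) m_def by simp
  obtain t where t: "w = Sig # t" "Sig \<notin> set t" using PwD0[OF P] by blast
  have zne: "z \<noteq> Emp" "z \<noteq> Sig" using proper_ne[OF z] by auto
  have ane: "a \<noteq> Emp" "a \<noteq> Sig" using proper_ne[OF a] by auto
  have w1: "w ! 1 = a" using w l1 by (cases l1) auto
  have lastw: "last w = a" using w ls by (cases ls) auto
  have i0: "i \<noteq> 0" using ij(3) ij(1) t zne by (metis nth_Cons_0 order_refl)
  have a0: "\<alpha> \<noteq> []" using i0 ij t unfolding \<alpha>_def by simp
  have lasta: "last \<alpha> \<noteq> z"
  proof -
    have la: "last \<alpha> = \<alpha> ! (length \<alpha> - 1)" using a0 by (simp add: last_conv_nth)
    have "length \<alpha> = i" unfolding \<alpha>_def using ij by simp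
    then have "last \<alpha> = w ! (i - 1)" using la i0 unfolding \<alpha>_def by simp
    then show ?thesis using ij(4) i0 by simp
  qed
  have jn: "Suc j \<noteq> length w"
  proof
    assume "Suc j = length w"
    then have "w ! j = last w" using last_conv_nth[of w] t by simp
    then show False using ij(3) ij(1) lastw za by auto
  qed
  have b0: "\<beta> \<noteq> []" using jn ij(2) unfolding \<beta>_def by simp
  have hdb: "hd \<beta> \<noteq> z" using jn ij(5) ij(2) unfolding \<beta>_def by (simp add: hd_drop_conv_nth)
  have lastb: "last \<beta> = a" using b0 lastw wd by (simp add: last_append)
  have hda: "hd \<alpha> = Sig" using a0 wd t by (cases \<alpha>) auto
  obtain \<alpha>1 y e where ye: "\<alpha> = \<alpha>1 @ y # e" "e = [] \<or> e = [Emp]" "y \<noteq> Emp"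
    using left_nb[OF nE wd a0] hda by auto
  obtain \<beta>1 y' e' where ye': "\<beta> = e' @ y' # \<beta>1" "e' = [] \<or> e' = [Emp]" "y' \<noteq> Emp"
    using right_nb[of w "\<alpha> @ replicate m z" \<beta>] nE wd b0 lastb ane by auto
  have ysig: "y \<noteq> Sig"
  proof
    assume ys: "y = Sig"
    have "\<alpha>1 = []"
    proof (rule ccontr)
      assume "\<alpha>1 \<noteq> []"
      then obtain c cs where "\<alpha>1 = c # cs" by (cases \<alpha>1) auto
      then have "Sig \<in> set t" using t wd ye ys by auto
      then show False using t by simp
    qed
    then have "w = Sig # e @ replicate m z @ \<beta>" using wd ye ys by simp
    moreover have "m \<noteq> 0" using odd_pos[OF modd] by simp
    ultimately have "w ! 1 = Emp \<or> w ! 1 = z" using ye(2) by (cases m) auto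
    then show False using w1 ane za by auto
  qed
  have y'sig: "y' \<noteq> Sig" using t wd ye' a0 by (cases \<alpha>) auto
  have yp: "proper y" using letter_cases ye(3) ysig by blast
  have y'p: "proper y'" using letter_cases ye'(3) y'sig by blast
  have m1: "replicate m z = z # replicate (m - 1) z" "replicate m z = replicate (m - 1) z @ [z]"
    using odd_pos[OF modd] by (cases m; simp add: replicate_append_same)+
  have yz: "y \<noteq> z"
  proof
    assume "y = z"
    show False
    proof (cases "e = []")
      case True then show False using lasta ye \<open>y = z\<close> by simp
    next
      case False
      then have "e = [Emp]" using ye(2) by simp
      then have "w = \<alpha>1 @ z # [Emp] @ z # (replicate (m - 1) z @ \<beta>)" using wd ye \<open>y = z\<close> m1 by simp
      from PwD2[OF P z this] zne show False by simp
    qed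
  qed
  have y'z: "y' \<noteq> z"
  proof
    assume "y' = z"
    show False
    proof (cases "e' = []")
      case True then show False using hdb ye' \<open>y' = z\<close> by simp
    next
      case False
      then have "e' = [Emp]" using ye'(2) by simp
      then have "w = (\<alpha> @ replicate (m - 1) z) @ z # [Emp] @ z # \<beta>1" using wd ye' \<open>y' = z\<close> m1 by simp
      from PwD2[OF P z this] zne show False by simp
    qed
  qed
  have eE: "e = [Emp]"
  proof -
    have "w = \<alpha>1 @ y # e @ z # (replicate (m - 1) z @ \<beta>)" using wd ye m1 by simp
    moreover have "y \<notin> set e" "z \<notin> set e" using ye(2) ye(3) zne by auto
    ultimately have "odd (length e)" using PwD4[OF P yp z yz] by blast
    then show ?thesis using ye(2) by auto
  qed
  have eE': "e' = [Emp]"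
  proof -
    have "w = (\<alpha> @ replicate (m - 1) z) @ z # e' @ y' # \<beta>1" using wd ye' m1 by simp
    moreover have "y' \<notin> set e'" "z \<notin> set e'" using ye'(2) ye'(3) zne by auto
    ultimately have "odd (length e')" using PwD4[OF P z y'p y'z[symmetric]] by blast
    then show ?thesis using ye'(2) by auto
  qed
  have wf: "w = \<alpha>1 @ y # Emp # replicate m z @ Emp # y' # \<beta>1" using wd ye ye' eE eE' by simp
  have yy': "y \<noteq> y'"
  proof
    assume "y = y'"
    have "w = \<alpha>1 @ y # (Emp # replicate m z @ [Emp]) @ y # \<beta>1" using wf \<open>y = y'\<close> by simp
    moreover have "y \<notin> set (Emp # replicate m z @ [Emp])" using ye(3) yz by auto
    ultimately have "even (length (Emp # replicate m z @ [Emp]))" using PwD2[OF P yp] by blast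
    then show False using modd by simp
  qed
  define F1 where "F1 = hd (filter (\<lambda>c. c \<in> {z, y}) w)"
  define F2 where "F2 = hd (filter (\<lambda>c. c \<in> {z, y'}) w)"
  have F1in: "F1 \<in> {z, y}"
  proof -
    have "filter (\<lambda>c. c \<in> {z, y}) w \<noteq> []" using wf by simp
    then show ?thesis unfolding F1_def using hd_in_set by fastforce
  qed
  have F2in: "F2 \<in> {z, y'}"
  proof -
    have "filter (\<lambda>c. c \<in> {z, y'}) w \<noteq> []" using wf by simp
    then show ?thesis unfolding F2_def using hd_in_set by fastforce
  qed
  have key: "F1 = z \<or> F2 = z"
  proof (rule ccontr)
    assume "\<not> (F1 = z \<or> F2 = z)"
    then have F: "F1 = y" "F2 = y'" using F1in F2in by auto
    have wA: "w = (\<alpha>1 @ [y, Emp]) @ z # (replicate (m - 1) z @ Emp # y' # \<beta>1)" using wf m1 by simp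
    have cA: "even (count_list (\<alpha>1 @ [y, Emp]) y) \<longleftrightarrow> F1 \<noteq> y"
      using Clemma[OF P z yp yz[symmetric] wA] unfolding F1_def by simp
    have c1: "even (count_list \<alpha>1 y)" using cA F ye(3) by (simp add: count_list_append)
    have pA: "odd (length \<alpha>1) \<longleftrightarrow> even (count_list \<alpha>1 y)"
      using P1a[OF P yp, of \<alpha>1] wf by simp
    have oa: "odd (length \<alpha>1)" using pA c1 by simp
    have wB: "w = (\<alpha>1 @ [y, Emp] @ replicate (m - 1) z) @ z # (Emp # y' # \<beta>1)" using wf m1 by simp
    have cB: "even (count_list (\<alpha>1 @ [y, Emp] @ replicate (m - 1) z) y') \<longleftrightarrow> F2 \<noteq> y'"
      using Clemma[OF P z y'p y'z[symmetric] wB] unfolding F2_def by simp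
    have cnt: "count_list (\<alpha>1 @ [y, Emp] @ replicate (m - 1) z) y' = count_list \<alpha>1 y'"
      using yy' ye'(3) y'z by (simp add: count_list_append count_list_0_iff)
    have c2: "odd (count_list \<alpha>1 y')" using cB cnt F by simp
    have wC: "w = (\<alpha>1 @ [y, Emp] @ replicate m z @ [Emp]) @ y' # \<beta>1" using wf by simp
    have pC: "odd (length (\<alpha>1 @ [y, Emp] @ replicate m z @ [Emp])) \<longleftrightarrow>
        even (count_list (\<alpha>1 @ [y, Emp] @ replicate m z @ [Emp]) y')"
      using P1a[OF P y'p wC] .
    have cnt2: "count_list (\<alpha>1 @ [y, Emp] @ replicate m z @ [Emp]) y' = count_list \<alpha>1 y'"
      using yy' ye'(3) y'z by (simp add: count_list_append count_list_0_iff)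
    show False using pC cnt2 c2 oa modd by simp
  qed
  have zin: "z \<in> set w" using wf odd_pos[OF modd] by simp
  show ?thesis
  proof (cases "F1 = z")
    case True
    have "last (filter (\<lambda>c. c \<in> {z, y}) w) = z"
      using first_last[OF P z yp yz[symmetric] zin] True unfolding F1_def by simp
    moreover have "y \<in> set w" using wf by simp
    ultimately show ?thesis using True yp yz unfolding F1_def by blast
  next
    case False
    then have F2z: "F2 = z" using key by simp
    have "last (filter (\<lambda>c. c \<in> {z, y'}) w) = z"
      using first_last[OF P z y'p y'z[symmetric] zin] F2z unfolding F2_def by simp
    moreover have "y' \<in> set w" using wf by simp
    ultimately show ?thesis using F2z y'p y'z unfolding F2_def by blast
  qed
qed



lemma filter_expand: "\<not> Q Emp \<Longrightarrow> filter Q (expand l) = filter Q l"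
  by (induction l rule: expand.induct) auto

lemma expand_hd: "expand (x # xs) = x # tl (expand (x # xs))"
  by (cases xs) auto

definition DS :: "'a letter list \<Rightarrow> 'a letter \<Rightarrow> nat set" where
  "DS v x = {min i (length v - i) | i. i < length v \<and> v ! i = x}"

lemma DS_finite: "finite (DS v x)"
proof -
  have "DS v x \<subseteq> (\<lambda>i. min i (length v - i)) ` {..<length v}" unfolding DS_def by auto
  then show ?thesis by (rule finite_subset) simp
qed

lemma cyc_dist_DS: "cyc_dist v x = Min (DS v x)"
  unfolding cyc_dist_def DS_def by simp

lemma DS_ne: "x \<in> set v \<Longrightarrow> DS v x \<noteq> {}"
  unfolding DS_def by (auto simp: in_set_conv_nth)

lemma cyc_dist_le: "i < length v \<Longrightarrow> v ! i = x \<Longrightarrow> cyc_dist v x \<le> min i (length v - i)"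
  unfolding cyc_dist_DS by (rule Min_le[OF DS_finite]) (auto simp: DS_def)

lemma encl_dist:
  assumes h: "hd (filter Q v) = z" and l: "last (filter Q v) = z" and Qz: "Q z" and Qy: "Q y"
    and yz: "y \<noteq> z" and yin: "y \<in> set v"
  shows "cyc_dist v z < cyc_dist v y"
proof -
  have "cyc_dist v y \<in> DS v y" unfolding cyc_dist_DS using Min_in[OF DS_finite DS_ne[OF yin]] .
  then obtain i where i: "i < length v" "v ! i = y" "cyc_dist v y = min i (length v - i)"
    unfolding DS_def by auto
  have vd: "v = take i v @ y # drop (Suc i) v" using id_take_nth_drop[OF i(1)] i(2) by simp
  have fv: "filter Q v = filter Q (take i v) @ y # filter Q (drop (Suc i) v)"
    using vd Qy by (metis filter.simps(2) filter_append)
  have "filter Q (take i v) \<noteq> []" using fv h yz by auto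
  then have "hd (filter Q (take i v)) = z" using fv h by simp
  moreover have "hd (filter Q (take i v)) \<in> set (filter Q (take i v))"
    using \<open>filter Q (take i v) \<noteq> []\<close> by (rule hd_in_set)
  ultimately have "z \<in> set (take i v)" by simp
  then obtain i1 where i1: "i1 < i" "v ! i1 = z" using i(1) by (auto simp: in_set_conv_nth)
  have "filter Q (drop (Suc i) v) \<noteq> []" using fv l yz by auto
  then have "last (filter Q (drop (Suc i) v)) = z" using fv l by simp
  moreover have "last (filter Q (drop (Suc i) v)) \<in> set (filter Q (drop (Suc i) v))"
    using \<open>filter Q (drop (Suc i) v) \<noteq> []\<close> by (rule last_in_set)
  ultimately have "z \<in> set (drop (Suc i) v)" by simp
  then obtain k where k: "k < length (drop (Suc i) v)" "drop (Suc i) v ! k = z"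
    by (auto simp: in_set_conv_nth)
  define i2 where "i2 = Suc i + k"
  have i2: "i2 < length v" "v ! i2 = z" "i < i2" using k i(1) unfolding i2_def by auto
  have d1: "cyc_dist v z \<le> min i1 (length v - i1)" using cyc_dist_le[of i1 v z] i1 i(1) by simp
  have d2: "cyc_dist v z \<le> min i2 (length v - i2)" using cyc_dist_le[of i2 v z] i2 by simp
  show ?thesis using d1 d2 i1 i2 i by auto
qed

lemma cd_a:
  assumes "v = Sig # Emp # Emp # expand (a # u0) @ [Emp, Emp]"
  shows "cyc_dist v a \<le> 3"
proof -
  have "v ! 3 = a" using assms expand_hd[of a u0] by (metis append_Cons nth_Cons_0 numeral_3_eq_3 nth_Cons_Suc)
  moreover have "3 < length v" using assms by simp
  ultimately have "cyc_dist v a \<le> min 3 (length v - 3)" using cyc_dist_le by blast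
  then show ?thesis by simp
qed

lemma cd_ge:
  assumes v: "v = Sig # Emp # Emp # ex @ [Emp, Emp]" and y: "proper y" and yin: "y \<in> set v"
  shows "3 \<le> cyc_dist v y"
proof -
  have yne: "y \<noteq> Emp" "y \<noteq> Sig" using proper_ne[OF y] by auto
  have "\<forall>d \<in> DS v y. 3 \<le> d"
  proof
    fix d assume "d \<in> DS v y"
    then obtain i where i: "i < length v" "v ! i = y" "d = min i (length v - i)" unfolding DS_def by auto
    have "i \<ge> 3"
    proof (rule ccontr)
      assume "\<not> i \<ge> 3"
      then have "i = 0 \<or> i = 1 \<or> i = 2" by auto
      then show False using i v yne by auto
    qed
    moreover have "length v - i \<ge> 3"
    proof (rule ccontr)
      assume "\<not> length v - i \<ge> 3"
      then have "i = length v - 1 \<or> i = length v - 2" using \<open>i \<ge> 3\<close> i(1) by auto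
      moreover have "v ! (length v - 1) = Emp" "v ! (length v - 2) = Emp"
        using v by (simp_all add: nth_append)
      ultimately show False using i yne by auto
    qed
    ultimately show "3 \<le> d" using i by simp
  qed
  then show ?thesis unfolding cyc_dist_DS
    by (subst Min_ge_iff[OF DS_finite DS_ne[OF yin]]) simp
qed

lemma sig_idx:
  assumes "x = s @ Sig # t" "Sig \<notin> set s" "Sig \<notin> set t" "j < length x" "x ! j = Sig"
  shows "j = length s"
proof (rule ccontr)
  assume jn: "j \<noteq> length s"
  show False
  proof (cases "j < length s")
    case True
    then have "s ! j = Sig" using assms by (simp add: nth_append)
    then show False using assms(2) True by (metis nth_mem)
  next
    case False
    then have "t ! (j - length s - 1) = Sig" "j - length s - 1 < length t"
      using assms jn by (auto simp: nth_append)
    then show False using assms(3) by (metis nth_mem)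
  qed
qed

lemma rot_unique:
  assumes x: "x = s @ Sig # t" "Sig \<notin> set s" "Sig \<notin> set t" and r: "rotate k x = Sig # u"
  shows "u = t @ s"
proof -
  have n: "length x > 0" using x by simp
  have "rotate k x ! 0 = x ! ((k + 0) mod length x)" using nth_rotate[of 0 x k] n by simp
  then have "x ! (k mod length x) = Sig" using r by simp
  then have km: "k mod length x = length s" using sig_idx[OF x] n by simp
  have "rotate k x = rotate (k mod length x) x" by (rule rotate_conv_mod)
  also have "\<dots> = Sig # t @ s" using km x(1) by (metis rotate_append append_Cons)
  finally show ?thesis using r by simp
qed

lemma revrot:
  assumes "rev (rotate k x) = Sig # u"
  shows "rotate (length x - 1 + k) x = Sig # rev u"
proof -
  have rk: "rotate k x = rotate1 (Sig # rev u)"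
    using assms by (metis rev_rev_ident rev.simps(2) rotate1.simps(2))
  have len: "length (Sig # rev u) = length x" using rk by (metis length_rotate length_rotate1)
  have "rotate (length x - 1 + k) x = rotate (length x - 1) (rotate k x)" by (rule rotate_rotate[symmetric])
  also have "\<dots> = rotate (length x - 1) (rotate 1 (Sig # rev u))"
    using rk by (simp only: One_nat_def rotate_Suc rotate0 id_apply)
  also have "\<dots> = rotate (length x - 1 + 1) (Sig # rev u)" by (rule rotate_rotate)
  also have "\<dots> = Sig # rev u" using len by (metis One_nat_def Suc_eq_plus1 diff_Suc_1 length_Cons rotate_length01 mod_self rotate_id)
  finally show ?thesis .
qed

lemma rep_form:
  assumes x: "x = s @ Sig # t" "Sig \<notin> set s" "Sig \<notin> set t"
    and A: "A = rotate k x \<or> A = rev (rotate k x)" and Au: "A = Sig # u"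
  shows "u = t @ s \<or> rev u = t @ s"
  using A
proof
  assume "A = rotate k x" then show ?thesis using rot_unique[OF x] Au by simp
next
  assume "A = rev (rotate k x)"
  then have "rev (rotate k x) = Sig # u" using Au by simp
  then have "rotate (length x - 1 + k) x = Sig # rev u" by (rule revrot)
  then show ?thesis using rot_unique[OF x] by simp
qed

lemma reps:
  assumes x: "x = s @ Sig # t" "Sig \<notin> set s" "Sig \<notin> set t"
    and A: "A = rotate k x \<or> A = rev (rotate k x)" and Au: "A = Sig # u"
    and B: "B = rotate k' x \<or> B = rev (rotate k' x)" and Bu: "B = Sig # u'"
  shows "u' = u \<or> u' = rev u"
  using rep_form[OF x A Au] rep_form[OF x B Bu] by (metis rev_rev_ident)



lemma clique_sub_max:
  assumes fin: "finite V" and K: "clique V E K"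
  shows "\<exists>M. maximal_clique V E M \<and> K \<subseteq> M"
proof -
  let ?A = "{M. clique V E M \<and> K \<subseteq> M}"
  have "?A \<subseteq> Pow V" unfolding clique_def by auto
  then have finA: "finite ?A" using fin by (meson finite_Pow_iff finite_subset)
  have "?A \<noteq> {}" using K by blast
  from finite_has_maximal[OF finA this] obtain M where M: "M \<in> ?A" "\<forall>b\<in>?A. M \<le> b \<longrightarrow> M = b" by blast
  have "maximal_clique V E M" unfolding maximal_clique_def
  proof (intro conjI notI)
    show "clique V E M" using M by simp
  next
    assume "\<exists>K'. clique V E K' \<and> M \<subset> K'"
    then obtain K' where "clique V E K'" "M \<subset> K'" by blast
    then show False using M by blast
  qed
  then show ?thesis using M by blast
qed

lemma inscribed_clique: "K \<in> inscribed V E \<Longrightarrow> clique V E K"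
  unfolding inscribed_def maximal_clique_def by simp

lemma finite_inscribed: "finite V \<Longrightarrow> finite (inscribed V E)"
proof -
  assume "finite V"
  moreover have "inscribed V E \<subseteq> Pow V" unfolding inscribed_def maximal_clique_def clique_def by auto
  ultimately show ?thesis by (meson finite_Pow_iff finite_subset)
qed

lemma card_le1_uniq: "finite A \<Longrightarrow> \<not> card A \<ge> 2 \<Longrightarrow> x \<in> A \<Longrightarrow> y \<in> A \<Longrightarrow> x = y"
proof (rule ccontr)
  assume "finite A" "\<not> card A \<ge> 2" "x \<in> A" "y \<in> A" "x \<noteq> y"
  then have "{x, y} \<subseteq> A" by auto
  then have "card {x, y} \<le> card A" using \<open>finite A\<close> by (simp add: card_mono)
  then show False using \<open>x \<noteq> y\<close> \<open>\<not> card A \<ge> 2\<close> by simp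
qed

lemma label_Prp:
  assumes fin: "finite V" and l: "label V E v = Prp K"
  shows "K \<in> inscribed V E \<and> v \<in> K"
proof -
  let ?A = "{K \<in> inscribed V E. v \<in> K}"
  have finA: "finite ?A" using finite_inscribed[OF fin] by simp
  have c: "\<not> card ?A \<ge> 2"
  proof
    assume "card ?A \<ge> 2"
    then have "label V E v = Sig" unfolding label_def by simp
    then show False using l by simp
  qed
  have ex: "\<exists>K\<in>inscribed V E. v \<in> K"
  proof (rule ccontr)
    assume "\<not> (\<exists>K\<in>inscribed V E. v \<in> K)"
    then have "label V E v = Emp" using c unfolding label_def by simp
    then show False using l by simp
  qed
  have "label V E v = Prp (THE K. K \<in> inscribed V E \<and> v \<in> K)" using c ex unfolding label_def by simp
  then have K: "K = (THE K. K \<in> inscribed V E \<and> v \<in> K)" using l by simp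
  have "\<exists>!K. K \<in> inscribed V E \<and> v \<in> K"
    using ex card_le1_uniq[OF finA c] by blast
  then show ?thesis using K by (metis (mono_tags, lifting) theI)
qed

lemma label_Prp2:
  assumes fin: "finite V" and KI: "K \<in> inscribed V E" and vK: "v \<in> K"
    and uniq: "\<And>K'. K' \<in> inscribed V E \<Longrightarrow> v \<in> K' \<Longrightarrow> K' = K"
  shows "label V E v = Prp K"
proof -
  let ?A = "{K \<in> inscribed V E. v \<in> K}"
  have A: "?A = {K}"
  proof
    show "?A \<subseteq> {K}" using uniq by blast
    show "{K} \<subseteq> ?A" using KI vK by blast
  qed
  have c: "\<not> card ?A \<ge> 2" unfolding A by simp
  have th: "(THE K. K \<in> inscribed V E \<and> v \<in> K) = K"
    by (rule the_equality) (use KI vK uniq in blast)+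
  have ex: "\<exists>K\<in>inscribed V E. v \<in> K" using KI vK by blast
  show ?thesis unfolding label_def using c th ex by (simp only: if_False if_True)
qed

lemma label_Sig:
  assumes fin: "finite V" and l: "label V E v = Sig"
  shows "\<exists>K K'. K \<in> inscribed V E \<and> K' \<in> inscribed V E \<and> K \<noteq> K' \<and> v \<in> K \<and> v \<in> K'"
proof -
  let ?A = "{K \<in> inscribed V E. v \<in> K}"
  have finA: "finite ?A" using finite_inscribed[OF fin] by simp
  have "card ?A \<ge> 2"
  proof (rule ccontr)
    assume "\<not> card ?A \<ge> 2"
    then have "label V E v \<noteq> Sig" unfolding label_def by simp
    then show False using l by simp
  qed
  then have "?A \<noteq> {}" by (metis card.empty not_numeral_le_zero)
  then obtain K where K: "K \<in> ?A" by blast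
  have "card (?A - {K}) \<ge> 1" using \<open>card ?A \<ge> 2\<close> K finA by (simp add: card_Diff_singleton)
  then have "?A - {K} \<noteq> {}" by (metis card.empty not_one_le_zero)
  then obtain K' where K': "K' \<in> ?A" "K' \<noteq> K" by blast
  then show ?thesis using K by blast
qed

lemma del_inscribed:
  assumes fin: "finite V" and sym: "\<And>x y. E x y \<Longrightarrow> E y x" and Vne: "V \<noteq> {}"
    and rim: "\<And>v. v \<in> V \<Longrightarrow> \<exists>u\<in>V. u \<noteq> v \<and> E v u \<and> (\<forall>K\<in>inscribed V E. \<not> (v \<in> K \<and> u \<in> K))"
    and inter: "\<And>K K' x y. K \<in> inscribed V E \<Longrightarrow> K' \<in> inscribed V E \<Longrightarrow> K \<noteq> K' \<Longrightarrow>
        x \<in> K \<Longrightarrow> x \<in> K' \<Longrightarrow> y \<in> K \<Longrightarrow> y \<in> K' \<Longrightarrow> x = y"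
    and S: "S \<subseteq> inscribed V E"
  shows "inscribed V (delete_cliques E S) = inscribed V E - S"
proof -
  let ?E = "delete_cliques E S"
  have cA: "clique V ?E K" if K: "K \<in> inscribed V E - S" for K
  proof -
    have cK: "clique V E K" using K inscribed_clique by blast
    have sub: "K \<subseteq> V" using cK unfolding clique_def by simp
    have "?E x y" if xy: "x \<in> K" "y \<in> K" "x \<noteq> y" for x y
    proof -
      have "E x y" using cK xy unfolding clique_def by blast
      moreover have "\<not> (\<exists>K'\<in>S. x \<in> K' \<and> y \<in> K')"
      proof
        assume "\<exists>K'\<in>S. x \<in> K' \<and> y \<in> K'"
        then obtain K' where K': "K' \<in> S" "x \<in> K'" "y \<in> K'" by blast
        then have "K \<noteq> K'" using K by blast
        then show False using inter[of K K' x y] K K' S xy by blast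
      qed
      ultimately show ?thesis unfolding delete_cliques_def by simp
    qed
    then show ?thesis using sub unfolding clique_def by blast
  qed
  have EE: "E x y" if "?E x y" for x y using that unfolding delete_cliques_def by simp
  have cE: "clique V E K" if "clique V ?E K" for K using that EE unfolding clique_def by blast
  show ?thesis
  proof
    show "inscribed V E - S \<subseteq> inscribed V ?E"
    proof
      fix K assume K: "K \<in> inscribed V E - S"
      have "maximal_clique V ?E K" unfolding maximal_clique_def
      proof (intro conjI notI)
        show "clique V ?E K" using cA K by blast
      next
        assume "\<exists>K'. clique V ?E K' \<and> K \<subset> K'"
        then obtain K' where "clique V ?E K'" "K \<subset> K'" by blast
        then have "clique V E K'" "K \<subset> K'" using cE by auto
        then show False using K unfolding inscribed_def maximal_clique_def by blast
      qed
      then show "K \<in> inscribed V ?E" using K unfolding inscribed_def by simp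
    qed
  next
    show "inscribed V ?E \<subseteq> inscribed V E - S"
    proof
      fix K assume K: "K \<in> inscribed V ?E"
      have mK: "maximal_clique V ?E K" "card K \<noteq> 2" using K unfolding inscribed_def by auto
      have cK: "clique V ?E K" using mK unfolding maximal_clique_def by simp
      have KV: "K \<subseteq> V" using cK unfolding clique_def by simp
      have finK: "finite K" using KV fin by (rule finite_subset)
      have notbig: "\<not> (\<exists>K'. clique V ?E K' \<and> K \<subset> K')" using mK unfolding maximal_clique_def by simp
      consider "card K \<le> 1" | "card K \<ge> 3" using mK(2) by linarith
      then show "K \<in> inscribed V E - S"
      proof cases
        case 1
        show ?thesis
        proof (cases "K = {}")
          case True
          obtain v where v: "v \<in> V" using Vne by blast
          have "clique V ?E {v}" unfolding clique_def using v by simp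
          moreover have "K \<subset> {v}" using True by blast
          ultimately show ?thesis using notbig by blast
        next
          case False
          then obtain v where Kv: "K = {v}" using 1 finK by (metis card_1_singletonE card_0_eq le_eq_less_or_eq less_one)
          then have v: "v \<in> V" using KV by simp
          obtain u where u: "u \<in> V" "u \<noteq> v" "E v u" "\<forall>K\<in>inscribed V E. \<not> (v \<in> K \<and> u \<in> K)"
            using rim[OF v] by blast
          have "clique V ?E {v, u}" unfolding clique_def delete_cliques_def
            using u v sym S by auto
          moreover have "K \<subset> {v, u}" using Kv u by auto
          ultimately show ?thesis using notbig by blast
        qed
      next
        case 2
        have cKE: "clique V E K" using cE cK by blast
        obtain M where M: "maximal_clique V E M" "K \<subseteq> M" using clique_sub_max[OF fin cKE] by blast
        have MV: "M \<subseteq> V" using M unfolding maximal_clique_def clique_def by simp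
        have "card K \<le> card M" using M(2) MV fin by (meson card_mono finite_subset)
        then have "card M \<noteq> 2" using 2 by simp
        then have MI: "M \<in> inscribed V E" using M unfolding inscribed_def by simp
        obtain x y where xy: "x \<in> K" "y \<in> K" "x \<noteq> y"
        proof -
          have "K \<noteq> {}" using 2 by auto
          then obtain x where x: "x \<in> K" by blast
          have "card (K - {x}) \<ge> 1" using 2 x finK by (simp add: card_Diff_singleton)
          then have "K - {x} \<noteq> {}" by (metis card.empty not_one_le_zero)
          then obtain y where "y \<in> K" "y \<noteq> x" by blast
          then show ?thesis using that x by blast
        qed
        have "?E x y" using cK xy unfolding clique_def by blast
        then have "M \<notin> S" using xy M(2) unfolding delete_cliques_def by blast
        then have MS: "M \<in> inscribed V E - S" using MI by simp
        have "K = M"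
        proof (rule ccontr)
          assume "K \<noteq> M"
          then have "K \<subset> M" using M(2) by blast
          then show False using notbig cA[OF MS] by blast
        qed
        then show ?thesis using MS by simp
      qed
    qed
  qed
qed

lemma dec2: "w = p @ X # m @ Y # q \<Longrightarrow> w ! length p = X \<and> w ! (length p + length m + 1) = Y \<and>
   (\<forall>j. length p < j \<and> j < length p + length m + 1 \<longrightarrow> w ! j \<in> set m)"
proof (intro conjI allI impI)
  assume w: "w = p @ X # m @ Y # q"
  show "w ! length p = X" using w by simp
  show "w ! (length p + length m + 1) = Y" using w by (simp add: nth_append)
  fix j assume j: "length p < j \<and> j < length p + length m + 1"
  have jl: "j - length p - 1 < length m" using j by linarith
  have "w ! j = (X # m @ Y # q) ! (j - length p)" using w j by (simp add: nth_append)
  also have "\<dots> = (m @ Y # q) ! (j - length p - 1)" using j by (cases "j - length p") auto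
  also have "\<dots> = m ! (j - length p - 1)" using jl by (simp add: nth_append)
  finally have "w ! j = m ! (j - length p - 1)" .
  moreover note jl
  ultimately show "w ! j \<in> set m" by simp
qed

lemma dec1: "w = p @ X # m \<Longrightarrow> w ! length p = X \<and>
   (\<forall>j. length p < j \<and> j < length w \<longrightarrow> w ! j \<in> set m)"
proof (intro conjI allI impI)
  assume w: "w = p @ X # m"
  show "w ! length p = X" using w by simp
  fix j assume j: "length p < j \<and> j < length w"
  have jl: "j - length p - 1 < length m" using j w by (simp; linarith)
  have "w ! j = (X # m) ! (j - length p)" using w j by (simp add: nth_append)
  also have "\<dots> = m ! (j - length p - 1)" using j by (cases "j - length p") auto
  finally have "w ! j = m ! (j - length p - 1)" .
  moreover note jl
  ultimately show "w ! j \<in> set m" by simp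
qed

lemma mod_cancel_le: "(a + j) mod n = (a + j') mod n \<Longrightarrow> j \<le> j' \<Longrightarrow> j' < n \<Longrightarrow> j = (j'::nat)"
proof -
  assume h: "(a + j) mod n = (a + j') mod n" "j \<le> j'" "j' < n"
  then have "n dvd (a + j') - (a + j)" using mod_eq_dvd_iff_nat[of "a + j" "a + j'" n] by simp
  then have "n dvd j' - j" by simp
  moreover have "j' - j < n" using h by simp
  ultimately have "j' - j = 0" using dvd_imp_le by (metis gr0I not_less)
  then show ?thesis using h by simp
qed

lemma mod_cancel_lt: "(a + j) mod n = (a + j') mod n \<Longrightarrow> j < n \<Longrightarrow> j' < n \<Longrightarrow> j = (j'::nat)"
  using mod_cancel_le[of a j n j'] mod_cancel_le[of a j' n j] by (cases "j \<le> j'") auto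



lemma rim_INV:
  assumes sun: "sunoid V E c" and three: "3 \<le> card (inscribed V E)"
  shows "INV (rim_word V E c)"
proof -
  let ?I = "inscribed V E"
  let ?n = "card V"
  have ms: "multisun V E c" and NC: "N_conditions V E c"
    and sub: "\<And>S. S \<subset> ?I \<Longrightarrow> N_conditions V (delete_cliques E S) c"
    using sun unfolding sunoid_def by auto
  have gr: "graph V E" and oddn: "odd ?n" and hr: "hamiltonian_rim V E c"
    and cons: "\<forall>K \<in> ?I. \<forall>x\<in>K. \<forall>y\<in>K. x \<noteq> y \<longrightarrow> \<not> consecutive V c x y"
    using ms unfolding multisun_def by auto
  have fin: "finite V" and sym: "\<And>x y. E x y \<Longrightarrow> E y x" using gr unfolding graph_def by auto
  have n3: "?n \<ge> 3" and bij: "bij_betw c {..<?n} V"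
    and heq: "{K. maximal_clique V E K \<and> card K = 2} = {{c i, c (Suc i mod ?n)} | i. i < ?n}"
    using hr unfolding hamiltonian_rim_def by auto
  obtain \<xi> where N3: "N3 V E \<xi>" using NC unfolding N_conditions_def by blast
  have xiV: "\<xi> \<in> V" and xiall: "\<And>K. K \<in> ?I \<Longrightarrow> \<xi> \<in> K"
    and xint: "\<And>K K'. K \<in> ?I \<Longrightarrow> K' \<in> ?I \<Longrightarrow> K \<noteq> K' \<Longrightarrow> K \<inter> K' = {\<xi>}"
    using N3 unfolding N3_def by auto
  have inter: "x = y" if "K \<in> ?I" "K' \<in> ?I" "K \<noteq> K'" "x \<in> K" "x \<in> K'" "y \<in> K" "y \<in> K'" for K K' x y
    using xint[OF that(1-3)] that(4-7) by (metis IntI singletonD)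
  have cV: "\<And>i. i < ?n \<Longrightarrow> c i \<in> V" using bij unfolding bij_betw_def by auto
  have cinj: "\<And>i j. i < ?n \<Longrightarrow> j < ?n \<Longrightarrow> c i = c j \<Longrightarrow> i = j"
    using bij unfolding bij_betw_def inj_on_def by auto
  have csurj: "\<exists>i<?n. c i = v" if "v \<in> V" for v
  proof -
    have "v \<in> c ` {..<?n}" using bij that unfolding bij_betw_def by simp
    then show ?thesis by auto
  qed
  have rimE: "E (c i) (c (Suc i mod ?n)) \<and> c i \<noteq> c (Suc i mod ?n) \<and>
      (\<forall>K\<in>?I. \<not> (c i \<in> K \<and> c (Suc i mod ?n) \<in> K))" if i: "i < ?n" for i
  proof -
    have "{c i, c (Suc i mod ?n)} \<in> {K. maximal_clique V E K \<and> card K = 2}" using heq i by blast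
    then have mc: "maximal_clique V E {c i, c (Suc i mod ?n)}" "card {c i, c (Suc i mod ?n)} = 2" by auto
    have ne: "c i \<noteq> c (Suc i mod ?n)"
    proof
      assume "c i = c (Suc i mod ?n)"
      then have "card {c i, c (Suc i mod ?n)} = 1" by simp
      then show False using mc(2) by simp
    qed
    have "clique V E {c i, c (Suc i mod ?n)}" using mc(1) unfolding maximal_clique_def by simp
    then have "E (c i) (c (Suc i mod ?n))" using ne unfolding clique_def by blast
    moreover have cc: "consecutive V c (c i) (c (Suc i mod ?n))" unfolding consecutive_def using i by blast
    moreover have "\<forall>K\<in>?I. \<not> (c i \<in> K \<and> c (Suc i mod ?n) \<in> K)"
    proof (intro ballI notI)
      fix K assume "K \<in> ?I" "c i \<in> K \<and> c (Suc i mod ?n) \<in> K"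
      then show False using cons ne cc by blast
    qed
    ultimately show ?thesis using ne by simp
  qed
  have rimv: "\<exists>u\<in>V. u \<noteq> v \<and> E v u \<and> (\<forall>K\<in>?I. \<not> (v \<in> K \<and> u \<in> K))" if v: "v \<in> V" for v
  proof -
    obtain i where i: "i < ?n" "c i = v" using csurj[OF v] by blast
    have u: "Suc i mod ?n < ?n" using n3 by simp
    have uV: "c (Suc i mod ?n) \<in> V" by (rule cV[OF u])
    have R: "E (c i) (c (Suc i mod ?n))" "c i \<noteq> c (Suc i mod ?n)"
      "\<forall>K\<in>?I. \<not> (c i \<in> K \<and> c (Suc i mod ?n) \<in> K)" using rimE[OF i(1)] by auto
    show ?thesis
    proof (rule bexI[OF _ uV], intro conjI)
      show "c (Suc i mod ?n) \<noteq> v" using R(2) i(2) by simp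
      show "E v (c (Suc i mod ?n))" using R(1) i(2) by simp
      show "\<forall>K\<in>?I. \<not> (v \<in> K \<and> c (Suc i mod ?n) \<in> K)" using R(3) i(2) by simp
    qed
  qed
  have Vne: "V \<noteq> {}" using n3 by auto
  have delI: "inscribed V (delete_cliques E S) = ?I - S" if "S \<subseteq> ?I" for S
  proof (rule del_inscribed)
    show "finite V" by (rule fin)
    show "\<And>x y. E x y \<Longrightarrow> E y x" by (rule sym)
    show "V \<noteq> {}" by (rule Vne)
    show "\<And>v. v \<in> V \<Longrightarrow> \<exists>u\<in>V. u \<noteq> v \<and> E v u \<and> (\<forall>K\<in>?I. \<not> (v \<in> K \<and> u \<in> K))" by (rule rimv)
    show "\<And>K K' x y. K \<in> ?I \<Longrightarrow> K' \<in> ?I \<Longrightarrow> K \<noteq> K' \<Longrightarrow>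
        x \<in> K \<Longrightarrow> x \<in> K' \<Longrightarrow> y \<in> K \<Longrightarrow> y \<in> K' \<Longrightarrow> x = y" by (rule inter)
    show "S \<subseteq> ?I" by (rule that)
  qed
  have finI: "finite ?I" using finite_inscribed[OF fin] .
  have lab_xi: "label V E \<xi> = Sig"
  proof -
    have "{K \<in> ?I. \<xi> \<in> K} = ?I" using xiall by blast
    then have "card {K \<in> ?I. \<xi> \<in> K} \<ge> 2" using three by simp
    then show ?thesis unfolding label_def by simp
  qed
  have lab_sig: "v = \<xi>" if h: "label V E v = Sig" for v
  proof -
    obtain K K' where "K \<in> ?I" "K' \<in> ?I" "K \<noteq> K'" "v \<in> K" "v \<in> K'" using label_Sig[OF fin h] by blast
    then show ?thesis using inter xiall by blast
  qed
  have lab_prp: "K \<in> ?I \<and> v \<in> K \<and> v \<noteq> \<xi>" if "label V E v = Prp K" for v K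
    using label_Prp[OF fin that] that lab_xi by auto
  have lab_prp2: "label V E v = Prp K" if "v \<noteq> \<xi>" "K \<in> ?I" "v \<in> K" for v K
  proof (rule label_Prp2[OF fin that(2,3)])
    fix K' assume "K' \<in> ?I" "v \<in> K'"
    then show "K' = K" using that inter xiall by blast
  qed
  show ?thesis unfolding INV_def
  proof (intro allI impI)
    fix s t assume r: "rim_word V E c = s @ Sig # t"
    define w where "w = Sig # t @ s"
    define i0 where "i0 = length s"
    define pos where "pos j = c ((i0 + j) mod ?n)" for j
    have lr: "length (rim_word V E c) = ?n" unfolding rim_word_def by simp
    have lw: "length w = ?n" using lr r unfolding w_def by simp
    have i0n: "i0 < ?n" using lr r unfolding i0_def by simp
    have rn: "rim_word V E c ! q = label V E (c q)" if "q < ?n" for q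
      using that unfolding rim_word_def by simp
    have wrot: "w = rotate i0 (rim_word V E c)" unfolding w_def i0_def r by (simp add: rotate_append)
    have wn: "w ! j = label V E (pos j)" if "j < ?n" for j
    proof -
      have "w ! j = rim_word V E c ! ((i0 + j) mod ?n)" using wrot nth_rotate[of j "rim_word V E c" i0] that lr by simp
      then show ?thesis unfolding pos_def using rn n3 by simp
    qed
    have pos0: "pos 0 = \<xi>" using wn[of 0] n3 lab_sig unfolding w_def by simp
    have posn: "pos ?n = \<xi>" using pos0 unfolding pos_def by simp
    have posV: "pos j \<in> V" for j unfolding pos_def using cV n3 by simp
    have posinj: "j = j'" if "j < ?n" "j' < ?n" "pos j = pos j'" for j j'
    proof -
      have "(i0 + j) mod ?n = (i0 + j') mod ?n" using cinj n3 that(3) unfolding pos_def by simp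
      then show ?thesis using mod_cancel_lt that by blast
    qed
    have nosig: "w ! j \<noteq> Sig" if "0 < j" "j < ?n" for j
    proof
      assume "w ! j = Sig"
      then have "pos j = \<xi>" using wn that lab_sig by simp
      then have "j = 0" using posinj[of j 0] pos0 that n3 by simp
      then show False using that by simp
    qed
    have sigt: "Sig \<notin> set (t @ s)"
    proof
      assume "Sig \<in> set (t @ s)"
      then obtain j where "j < length (t @ s)" "(t @ s) ! j = Sig" by (metis in_set_conv_nth)
      then have "w ! Suc j = Sig" "Suc j < ?n" using lw unfolding w_def by auto
      then show False using nosig by blast
    qed
    have prpinfo: "K \<in> ?I \<and> pos j \<in> K \<and> pos j \<noteq> \<xi>" if "j < ?n" "w ! j = Prp K" for j K
      using lab_prp wn that by metis
    have notin: "pos j \<notin> K" if "0 < j" "j < ?n" "w ! j \<noteq> Prp K" "K \<in> ?I" for j K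
    proof
      assume pK: "pos j \<in> K"
      have "pos j \<noteq> \<xi>" using posinj[of j 0] pos0 that n3 by auto
      then have "label V E (pos j) = Prp K" using lab_prp2 pK that(4) by blast
      then show False using wn that by simp
    qed
    have rp: "rim_path V E' c ((i0 + j1) mod ?n) (j2 - j1) \<and> c ((i0 + j1) mod ?n) = pos j1 \<and>
        path_end V c ((i0 + j1) mod ?n) (j2 - j1) = pos j2"
      if "j1 < j2" "j2 \<le> ?n" "j2 - j1 < ?n" "\<forall>j'. j1 < j' \<and> j' < j2 \<longrightarrow> pos j' \<notin> \<Union> (inscribed V E')"
      for E' j1 j2
    proof (intro conjI)
      show "c ((i0 + j1) mod ?n) = pos j1" unfolding pos_def ..
      have m1: "((i0 + j1) mod ?n + (j2 - j1)) mod ?n = (i0 + j1 + (j2 - j1)) mod ?n" by (rule mod_add_left_eq)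
      have m2: "i0 + j1 + (j2 - j1) = i0 + j2" using that(1) by simp
      show "path_end V c ((i0 + j1) mod ?n) (j2 - j1) = pos j2"
        unfolding path_end_def pos_def using m1 m2 by simp
      show "rim_path V E' c ((i0 + j1) mod ?n) (j2 - j1)" unfolding rim_path_def
      proof (intro conjI allI impI)
        show "(i0 + j1) mod ?n < ?n" using n3 by simp
        show "1 \<le> j2 - j1" using that by simp
        show "j2 - j1 < ?n" using that by simp
        fix j assume j: "0 < j \<and> j < j2 - j1"
        have "c (((i0 + j1) mod ?n + j) mod ?n) = pos (j1 + j)" unfolding pos_def
          by (simp add: mod_add_left_eq add.assoc)
        then show "c (((i0 + j1) mod ?n + j) mod ?n) \<notin> \<Union> (inscribed V E')"
          using that(4) j by auto
      qed
    qed
    have hint: "pos j' \<notin> \<Union> (inscribed V E')"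
      if h: "inscribed V E' = Ks" "Ks \<subseteq> ?I" "0 < j'" "j' < ?n" "\<forall>K \<in> Ks. w ! j' \<noteq> Prp K" for E' Ks j'
    proof
      assume "pos j' \<in> \<Union> (inscribed V E')"
      then obtain K where "K \<in> Ks" "pos j' \<in> K" using h(1) by blast
      then show False using notin[of j' K] h by blast
    qed
    have del1: "inscribed V (delete_cliques E (?I - {K})) = {K} \<and> N1 V (delete_cliques E (?I - {K})) c"
      if "K \<in> ?I" for K
    proof
      have e: "?I - (?I - {K}) = {K}" using that by blast
      show "inscribed V (delete_cliques E (?I - {K})) = {K}" using delI[OF Diff_subset] e by simp
      have "?I - {K} \<subset> ?I" using that by blast
      then have "N_conditions V (delete_cliques E (?I - {K})) c" by (rule sub)
      then show "N1 V (delete_cliques E (?I - {K})) c" unfolding N_conditions_def by (rule conjunct1)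
    qed
    have del2: "inscribed V (delete_cliques E (?I - {K, K'})) = {K, K'} \<and> N5 V (delete_cliques E (?I - {K, K'})) c \<xi>"
      if KK: "K \<in> ?I" "K' \<in> ?I" "K \<noteq> K'" for K K'
    proof
      have e: "?I - (?I - {K, K'}) = {K, K'}" using KK by blast
      show ins2: "inscribed V (delete_cliques E (?I - {K, K'})) = {K, K'}" using delI[OF Diff_subset] e by simp
      have "?I - {K, K'} \<subset> ?I" using KK by blast
      then have "N_conditions V (delete_cliques E (?I - {K, K'})) c" by (rule sub)
      then obtain \<xi>' where x': "N3 V (delete_cliques E (?I - {K, K'})) \<xi>'" "N5 V (delete_cliques E (?I - {K, K'})) c \<xi>'"
        unfolding N_conditions_def by blast
      have x3: "\<forall>A \<in> inscribed V (delete_cliques E (?I - {K, K'})). \<xi>' \<in> A" using x'(1) unfolding N3_def by blast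
      have "\<xi>' \<in> K" "\<xi>' \<in> K'" using x3 ins2 by auto
      then have "\<xi>' \<in> K \<inter> K'" by simp
      then have "\<xi>' = \<xi>" using xint[OF KK] by simp
      then show "N5 V (delete_cliques E (?I - {K, K'})) c \<xi>" using x'(2) by simp
    qed
    have A: "\<exists>t'. w = Sig # t' \<and> Sig \<notin> set t'" using sigt unfolding w_def by blast
    have B: "odd (length w)" using lw oddn by simp
    have L1: "even (length m)" if X: "proper X" and wd: "w = Sig # m @ X # s'" and Xm: "X \<notin> set m" for X m s'
    proof -
      obtain K where XK: "X = Prp K" using X unfolding proper_def by blast
      have d: "w ! (length m + 1) = X" "\<forall>j. 0 < j \<and> j < length m + 1 \<longrightarrow> w ! j \<in> set m"
        using dec2[of w "[]" Sig m X s'] wd by auto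
      define j2 where "j2 = length m + 1"
      have j2n: "j2 < ?n" using lw wd unfolding j2_def by simp
      have KI: "K \<in> ?I" and pK: "pos j2 \<in> K" using prpinfo[of j2 K] j2n d XK unfolding j2_def by auto
      note D = del1[OF KI]
      have int: "\<forall>j'. 0 < j' \<and> j' < j2 \<longrightarrow> pos j' \<notin> \<Union> (inscribed V (delete_cliques E (?I - {K})))"
      proof (intro allI impI)
        fix j' assume j': "0 < j' \<and> j' < j2"
        have "w ! j' \<noteq> Prp K" using d(2) j' Xm XK unfolding j2_def by auto
        then show "pos j' \<notin> \<Union> (inscribed V (delete_cliques E (?I - {K})))"
          using hint[of "delete_cliques E (?I - {K})" "{K}" j'] D KI j' j2n by auto
      qed
      have R: "rim_path V (delete_cliques E (?I - {K})) c ((i0 + 0) mod ?n) (j2 - 0)"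
        "c ((i0 + 0) mod ?n) = pos 0" "path_end V c ((i0 + 0) mod ?n) (j2 - 0) = pos j2"
        using rp[of 0 j2 "delete_cliques E (?I - {K})"] int j2n unfolding j2_def by auto
      have "AB_path V (delete_cliques E (?I - {K})) c K K ((i0 + 0) mod ?n) (j2 - 0)"
        unfolding AB_path_def using R pK pos0 xiall[OF KI] by simp
      then have "even (j2 - 0 + 1)" using D unfolding N1_def by blast
      then show ?thesis unfolding j2_def by simp
    qed
    have L2: "even (length m)" if X: "proper X" and wd: "w = p @ X # m @ X # s'" and Xm: "X \<notin> set m" for X p m s'
    proof -
      obtain K where XK: "X = Prp K" using X unfolding proper_def by blast
      have d: "w ! length p = X" "w ! (length p + length m + 1) = X"
        "\<forall>j. length p < j \<and> j < length p + length m + 1 \<longrightarrow> w ! j \<in> set m"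
        using dec2[OF wd] by auto
      define j1 where "j1 = length p"
      define j2 where "j2 = length p + length m + 1"
      have j2n: "j2 < ?n" using lw wd unfolding j2_def by simp
      have KI: "K \<in> ?I" and pK: "pos j2 \<in> K" using prpinfo[of j2 K] j2n d XK unfolding j2_def by auto
      have pK1: "pos j1 \<in> K" using prpinfo[of j1 K] j2n d XK unfolding j1_def j2_def by auto
      note D = del1[OF KI]
      have int: "\<forall>j'. j1 < j' \<and> j' < j2 \<longrightarrow> pos j' \<notin> \<Union> (inscribed V (delete_cliques E (?I - {K})))"
      proof (intro allI impI)
        fix j' assume j': "j1 < j' \<and> j' < j2"
        have "w ! j' \<noteq> Prp K" using d(3) j' Xm XK unfolding j1_def j2_def by auto
        then show "pos j' \<notin> \<Union> (inscribed V (delete_cliques E (?I - {K})))"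
          using hint[of "delete_cliques E (?I - {K})" "{K}" j'] D KI j' j2n by auto
      qed
      have R: "rim_path V (delete_cliques E (?I - {K})) c ((i0 + j1) mod ?n) (j2 - j1)"
        "c ((i0 + j1) mod ?n) = pos j1" "path_end V c ((i0 + j1) mod ?n) (j2 - j1) = pos j2"
        using rp[of j1 j2 "delete_cliques E (?I - {K})"] int j2n unfolding j1_def j2_def by auto
      have "AB_path V (delete_cliques E (?I - {K})) c K K ((i0 + j1) mod ?n) (j2 - j1)"
        unfolding AB_path_def using R pK pK1 by simp
      then have "even (j2 - j1 + 1)" using D unfolding N1_def by blast
      then show ?thesis unfolding j1_def j2_def by simp
    qed
    have L3: "even (length m)" if X: "proper X" and wd: "w = p @ X # m" and Xm: "X \<notin> set m" for X p m
    proof -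
      obtain K where XK: "X = Prp K" using X unfolding proper_def by blast
      have d: "w ! length p = X" "\<forall>j. length p < j \<and> j < length w \<longrightarrow> w ! j \<in> set m"
        using dec1[OF wd] by auto
      define j1 where "j1 = length p"
      have j1n: "j1 < ?n" using lw wd unfolding j1_def by simp
      have j10: "j1 \<noteq> 0"
      proof
        assume "j1 = 0"
        then have "w ! 0 = X" using d unfolding j1_def by simp
        then show False using X proper_ne unfolding w_def by auto
      qed
      have KI: "K \<in> ?I" and pK1: "pos j1 \<in> K" using prpinfo[of j1 K] j1n d XK unfolding j1_def by auto
      note D = del1[OF KI]
      have int: "\<forall>j'. j1 < j' \<and> j' < ?n \<longrightarrow> pos j' \<notin> \<Union> (inscribed V (delete_cliques E (?I - {K})))"
      proof (intro allI impI)
        fix j' assume j': "j1 < j' \<and> j' < ?n"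
        have "w ! j' \<noteq> Prp K" using d(2) j' Xm XK lw unfolding j1_def by auto
        then show "pos j' \<notin> \<Union> (inscribed V (delete_cliques E (?I - {K})))"
          using hint[of "delete_cliques E (?I - {K})" "{K}" j'] D KI j' by auto
      qed
      have R: "rim_path V (delete_cliques E (?I - {K})) c ((i0 + j1) mod ?n) (?n - j1)"
        "c ((i0 + j1) mod ?n) = pos j1" "path_end V c ((i0 + j1) mod ?n) (?n - j1) = pos ?n"
        using rp[of j1 "?n" "delete_cliques E (?I - {K})"] int j1n j10 by auto
      have "AB_path V (delete_cliques E (?I - {K})) c K K ((i0 + j1) mod ?n) (?n - j1)"
        unfolding AB_path_def using R pK1 posn xiall[OF KI] by simp
      then have "even (?n - j1 + 1)" using D unfolding N1_def by blast
      moreover have "?n = j1 + 1 + length m" using lw wd unfolding j1_def by simp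
      ultimately show ?thesis by simp
    qed
    have L4: "odd (length m)" if X: "proper X" and Y: "proper Y" and XY: "X \<noteq> Y"
      and wd: "w = p @ X # m @ Y # s'" and Xm: "X \<notin> set m" and Ym: "Y \<notin> set m" for X Y p m s'
    proof -
      obtain K where XK: "X = Prp K" using X unfolding proper_def by blast
      obtain K' where YK: "Y = Prp K'" using Y unfolding proper_def by blast
      have d: "w ! length p = X" "w ! (length p + length m + 1) = Y"
        "\<forall>j. length p < j \<and> j < length p + length m + 1 \<longrightarrow> w ! j \<in> set m"
        using dec2[OF wd] by auto
      define j1 where "j1 = length p"
      define j2 where "j2 = length p + length m + 1"
      have j2n: "j2 < ?n" using lw wd unfolding j2_def by simp
      have P2: "K' \<in> ?I" "pos j2 \<in> K'" "pos j2 \<noteq> \<xi>" using prpinfo[of j2 K'] j2n d YK unfolding j2_def by auto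
      have P1: "K \<in> ?I" "pos j1 \<in> K" "pos j1 \<noteq> \<xi>" using prpinfo[of j1 K] j2n d XK unfolding j1_def j2_def by auto
      have KK: "K \<noteq> K'" using XY XK YK by simp
      note D = del2[OF P1(1) P2(1) KK]
      have int: "\<forall>j'. j1 < j' \<and> j' < j2 \<longrightarrow> pos j' \<notin> \<Union> (inscribed V (delete_cliques E (?I - {K, K'})))"
      proof (intro allI impI)
        fix j' assume j': "j1 < j' \<and> j' < j2"
        have "w ! j' \<in> set m" using d(3) j' unfolding j1_def j2_def by auto
        then have "\<forall>K''\<in>{K, K'}. w ! j' \<noteq> Prp K''" using Xm Ym XK YK by auto
        then show "pos j' \<notin> \<Union> (inscribed V (delete_cliques E (?I - {K, K'})))"
          using hint[of "delete_cliques E (?I - {K, K'})" "{K, K'}" j'] D P1 P2 j' j2n by auto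
      qed
      have R: "rim_path V (delete_cliques E (?I - {K, K'})) c ((i0 + j1) mod ?n) (j2 - j1)"
        "c ((i0 + j1) mod ?n) = pos j1" "path_end V c ((i0 + j1) mod ?n) (j2 - j1) = pos j2"
        using rp[of j1 j2 "delete_cliques E (?I - {K, K'})"] int j2n unfolding j1_def j2_def by auto
      have AB: "AB_path V (delete_cliques E (?I - {K, K'})) c K K' ((i0 + j1) mod ?n) (j2 - j1)"
        unfolding AB_path_def using R P1 P2 by simp
      let ?E2 = "delete_cliques E (?I - {K, K'})"
      have N5': "\<forall>A\<in>inscribed V ?E2. \<forall>B\<in>inscribed V ?E2. A \<noteq> B \<longrightarrow>
           (\<forall>i k. AB_path V ?E2 c A B i k \<and> c i \<noteq> \<xi> \<and> path_end V c i k \<noteq> \<xi> \<longrightarrow> odd (k + 1))"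
        using D unfolding N5_def by (rule conjunct2)
      have Kin: "K \<in> inscribed V ?E2" "K' \<in> inscribed V ?E2" using D by auto
      have h1: "\<forall>i k. AB_path V ?E2 c K K' i k \<and> c i \<noteq> \<xi> \<and> path_end V c i k \<noteq> \<xi> \<longrightarrow> odd (k + 1)"
        using N5' Kin KK by blast
      have cond: "AB_path V ?E2 c K K' ((i0 + j1) mod ?n) (j2 - j1) \<and> c ((i0 + j1) mod ?n) \<noteq> \<xi> \<and>
          path_end V c ((i0 + j1) mod ?n) (j2 - j1) \<noteq> \<xi>" using AB R P1 P2 by simp
      have "odd (j2 - j1 + 1)" using h1 cond by blast
      then show ?thesis unfolding j1_def j2_def by simp
    qed
    have "Pw w" unfolding Pw_def
    proof (intro conjI)
      show "\<exists>t'. w = Sig # t' \<and> Sig \<notin> set t'" by (rule A)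
      show "odd (length w)" by (rule B)
      show "\<forall>X m s. proper X \<longrightarrow> w = Sig # m @ X # s \<longrightarrow> X \<notin> set m \<longrightarrow> even (length m)"
        using L1 by blast
      show "\<forall>X p m s. proper X \<longrightarrow> w = p @ X # m @ X # s \<longrightarrow> X \<notin> set m \<longrightarrow> even (length m)"
        using L2 by blast
      show "\<forall>X p m. proper X \<longrightarrow> w = p @ X # m \<longrightarrow> X \<notin> set m \<longrightarrow> even (length m)"
        using L3 by blast
      show "\<forall>X Y p m s. proper X \<longrightarrow> proper Y \<longrightarrow> X \<noteq> Y \<longrightarrow> w = p @ X # m @ Y # s \<longrightarrow>
        X \<notin> set m \<longrightarrow> Y \<notin> set m \<longrightarrow> odd (length m)"
        using L4 by blast
    qed
    then show "Pw (Sig # t @ s)" unfolding w_def .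
  qed
qed



lemma pat_set1: "set (pat xs) \<subseteq> set xs"
  by (induction xs rule: pat.induct) auto

lemma pat_set2: "set xs \<subseteq> insert Emp (set (pat xs))"
  by (induction xs rule: pat.induct) auto

lemma cyc_equiv_set: "cyc_equiv v w \<Longrightarrow> set v = set w"
  unfolding cyc_equiv_def by auto

lemma W_letters: "u \<in> word_class r \<Longrightarrow> set u \<subseteq> insert Emp (set r)"
proof -
  assume "u \<in> word_class r"
  then have "cyc_equiv (pat u) (pat r)" unfolding word_class_def approx_def by simp
  then have "set (pat u) = set (pat r)" by (rule cyc_equiv_set)
  then show ?thesis using pat_set1[of r] pat_set2[of u] by blast
qed

lemma alph_card:
  assumes fin: "finite V" and c3: "card {x \<in> alphabet (word_class (rim_word V E c)). proper x} \<ge> 3"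
  shows "3 \<le> card (inscribed V E)"
proof -
  let ?W = "word_class (rim_word V E c)"
  have sub: "{x \<in> alphabet ?W. proper x} \<subseteq> Prp ` inscribed V E"
  proof
    fix x assume x: "x \<in> {x \<in> alphabet ?W. proper x}"
    then obtain u where u: "u \<in> ?W" "x \<in> set u" unfolding alphabet_def by auto
    have "x \<noteq> Emp" using x proper_ne by auto
    then have "x \<in> set (rim_word V E c)" using W_letters[OF u(1)] u(2) by blast
    then obtain i where "i < card V" "x = label V E (c i)" unfolding rim_word_def by auto
    moreover obtain K where "x = Prp K" using x unfolding proper_def by auto
    ultimately have "K \<in> inscribed V E" using label_Prp[OF fin] by metis
    then show "x \<in> Prp ` inscribed V E" using \<open>x = Prp K\<close> by simp
  qed
  have finI: "finite (inscribed V E)" by (rule finite_inscribed[OF fin])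
  have "card {x \<in> alphabet ?W. proper x} \<le> card (Prp ` inscribed V E)"
    using sub finI by (simp add: card_mono)
  also have "\<dots> \<le> card (inscribed V E)" by (rule card_image_le[OF finI])
  finally show ?thesis using c3 by simp
qed

lemma filter_rev_hd_last:
  assumes "filter Q l \<noteq> []"
  shows "hd (filter Q (rev l)) = last (filter Q l)" "last (filter Q (rev l)) = hd (filter Q l)"
  using assms by (simp_all add: rev_filter[symmetric] hd_rev last_rev)

lemma in_expand: "y \<noteq> Emp \<Longrightarrow> y \<in> set u \<Longrightarrow> y \<in> set (expand u)"
proof -
  assume "y \<noteq> Emp" "y \<in> set u"
  then have "filter (\<lambda>c. c = y) (expand u) = filter (\<lambda>c. c = y) u" by (intro filter_expand) simp
  moreover have "filter (\<lambda>c. c = y) u \<noteq> []" using \<open>y \<in> set u\<close> by (simp add: filter_empty_conv)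
  ultimately have "filter (\<lambda>c. c = y) (expand u) \<noteq> []" by simp
  then show ?thesis by (simp add: filter_empty_conv)
qed

theorem corollary2:
  fixes W :: "'v set letter list set"
    and a z :: "'v set letter"
    and w wt :: "'v set letter list"
    and l1 ls :: nat
  assumes "sunword W"
    and "card {x \<in> alphabet W. proper x} \<ge> 3"
    and "a \<in> alphabet W" and "proper a"
    and "\<forall>x \<in> alphabet W. proper x \<and> x \<noteq> a \<longrightarrow> induced_prec W a x"
    and "w \<in> W" and "pat w = w"
    and "w = [Sig] @ replicate l1 a @ [Emp] @ wt @ [Emp] @ replicate ls a"
    and "l1 \<ge> 1" and "ls \<ge> 1"
    and "Sig \<notin> set wt"
    and "z \<in> alphabet W" and "z \<noteq> Emp"
    and "\<forall>y \<in> alphabet W. y \<noteq> Emp \<and> y \<noteq> z \<longrightarrow> induced_prec W y z"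
  shows "exponents_even w z"
proof -
  note A = assms
  obtain V E c where sun: "sunoid V E c" and Wd: "W = word_class (rim_word V E c)"
    using A(1) unfolding sunword_def by blast
  define r where "r = rim_word V E c"
  have fin: "finite V" using sun unfolding sunoid_def multisun_def graph_def by blast
  have three: "3 \<le> card (inscribed V E)" using alph_card[OF fin] A(2) Wd by simp
  have INVr: "INV (pat r)" using INV_pat[OF rim_INV[OF sun three]] unfolding r_def .
  have memW: "\<exists>k. x = rotate k (pat r) \<or> x = rev (rotate k (pat r))" if "x \<in> W" "pat x = x" for x
  proof -
    have "cyc_equiv (pat x) (pat r)" using that(1) unfolding Wd word_class_def approx_def r_def by simp
    then show ?thesis using that(2) unfolding cyc_equiv_def by simp
  qed
  obtain k where wk: "w = rotate k (pat r) \<or> w = rev (rotate k (pat r))" using memW A(6,7) by blast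
  have INVw: "INV w" using wk INV_rotate[OF INVr] INV_rev[OF INV_rotate[OF INVr]] by auto
  define u where "u = replicate l1 a @ [Emp] @ wt @ [Emp] @ replicate ls a"
  have wu: "w = Sig # u" using A(8) unfolding u_def by simp
  have Pw: "Pw w" using INVw wu unfolding INV_def by (metis append_Nil append_Nil2)
  have sigw: "Sig \<in> set w" using wu by simp
  have "Sig \<in> set (pat r)" using wk sigw by auto
  then obtain s0 t0 where st0: "pat r = s0 @ Sig # t0" by (meson split_list)
  have "Pw (Sig # t0 @ s0)" using INVr st0 unfolding INV_def by blast
  then have sig0: "Sig \<notin> set s0" "Sig \<notin> set t0" using PwD0 by fastforce+
  have reps': "u' = u \<or> u' = rev u" if h: "Sig # u' \<in> W" "pat (Sig # u') = Sig # u'" for u'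
  proof -
    obtain k' where "Sig # u' = rotate k' (pat r) \<or> Sig # u' = rev (rotate k' (pat r))"
      using memW[OF h] by blast
    then show ?thesis using reps[OF st0 sig0 wk wu] by blast
  qed
  have ap: "proper a" by (rule A(4))
  have aprops: "a \<noteq> Emp" "a \<noteq> Sig" using proper_ne[OF ap] by auto
  have ua: "\<exists>u0. u = a # u0" using A(9) unfolding u_def by (cases l1) auto
  have ru: "rev u = replicate ls a @ Emp # rev wt @ Emp # replicate l1 a" unfolding u_def by simp
  have rua: "\<exists>u0. rev u = a # u0" using A(10) ru by (cases ls) auto
  have zsig: "z \<noteq> Sig"
  proof
    assume zs: "z = Sig"
    have "induced_prec W a Sig" using A(14) A(3) aprops zs by blast
    then obtain u1 where "prec_from u1 a Sig" unfolding induced_prec_def by blast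
    moreover have "\<not> proper (Sig::'v set letter)" unfolding proper_def by simp
    ultimately show False using aprops unfolding prec_from_def Let_def by simp
  qed
  have zp: "proper z" using letter_cases A(13) zsig by blast
  have za: "z \<noteq> a"
  proof
    assume za: "z = a"
    obtain y where y: "y \<in> alphabet W" "proper y" "y \<noteq> a"
    proof -
      let ?S = "{x \<in> alphabet W. proper x}"
      have "?S - {a} \<noteq> {}"
      proof
        assume "?S - {a} = {}"
        then have "?S \<subseteq> {a}" by blast
        then have "card ?S \<le> card {a}" by (intro card_mono) auto
        then show False using A(2) by simp
      qed
      then show ?thesis using that by blast
    qed
    have "induced_prec W y a" using A(14) y za proper_ne[OF y(2)] by blast
    then obtain u' where u': "Sig # u' \<in> W" "pat (Sig # u') = Sig # u'" "prec_from u' y a"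
      unfolding induced_prec_def by blast
    define v where "v = Sig # Emp # Emp # expand u' @ [Emp, Emp]"
    have lt: "cyc_dist v y < cyc_dist v a" and yu: "y \<in> set u'"
      using u'(3) proper_ne[OF y(2)] unfolding prec_from_def Let_def v_def by auto
    obtain u0 where u0: "u' = a # u0" using reps'[OF u'(1,2)] ua rua by blast
    have "cyc_dist v a \<le> 3" using cd_a[of v a u0] u0 unfolding v_def by simp
    moreover have "3 \<le> cyc_dist v y"
      using cd_ge[OF v_def y(2)] in_expand[OF _ yu] proper_ne[OF y(2)] unfolding v_def by auto
    ultimately show False using lt by simp
  qed
  show ?thesis
  proof (rule ccontr)
    assume ne: "\<not> exponents_even w z"
    obtain y where y: "proper y" "y \<noteq> z" "y \<in> set w" "hd (filter (\<lambda>c. c \<in> {z, y}) w) = z"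
        "last (filter (\<lambda>c. c \<in> {z, y}) w) = z"
      using run_lemma[OF Pw A(7) A(8) A(9) A(10) ap zp za ne] by blast
    have yne: "y \<noteq> Emp" "y \<noteq> Sig" using proper_ne[OF y(1)] by auto
    have yal: "y \<in> alphabet W" using y(3) A(6) unfolding alphabet_def by blast
    have "induced_prec W y z" using A(14) yal yne y(2) by blast
    then obtain u' where u': "Sig # u' \<in> W" "pat (Sig # u') = Sig # u'" "prec_from u' y z"
      unfolding induced_prec_def by blast
    define v where "v = Sig # Emp # Emp # expand u' @ [Emp, Emp]"
    define Q where "Q = (\<lambda>c. c \<in> {z, y})"
    have lt: "cyc_dist v y < cyc_dist v z" and yu: "y \<in> set u'"
      using u'(3) yne unfolding prec_from_def Let_def v_def by auto
    have fw: "filter Q w = filter Q u" using wu zsig yne unfolding Q_def by auto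
    have fne: "filter Q u \<noteq> []" using y(3) wu yne unfolding Q_def by (auto simp: filter_empty_conv)
    have hl: "hd (filter Q u') = z \<and> last (filter Q u') = z"
      using reps'[OF u'(1,2)]
    proof
      assume "u' = u" then show ?thesis using y(4,5) fw unfolding Q_def by simp
    next
      assume "u' = rev u" then show ?thesis using y(4,5) fw filter_rev_hd_last[OF fne] unfolding Q_def by simp
    qed
    have QE: "\<not> Q Emp" "\<not> Q Sig" using zp yne proper_ne unfolding Q_def by auto
    have fv: "filter Q v = filter Q u'" unfolding v_def using filter_expand[of Q u'] QE by simp
    have "cyc_dist v z < cyc_dist v y"
    proof (rule encl_dist[of Q v z y])
      show "hd (filter Q v) = z" using hl fv by simp
      show "last (filter Q v) = z" using hl fv by simp
      show "Q z" unfolding Q_def by simp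
      show "Q y" unfolding Q_def by simp
      show "y \<noteq> z" by (rule y(2))
      show "y \<in> set v" using in_expand[OF yne(1) yu] unfolding v_def by simp
    qed
    then show False using lt by simp
  qed
qed


end
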